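(* In the setting described in the context, let $\mathbf W^\diamond=[\mathbf W_c^\diamond,\mathbf W_s^\diamond]$ be a stationary point of the problem $\max\{f(\mathbf W):\mathrm{tr}(\mathbf W\mathbf W^H)\le P_t\}$ with associated Lagrange multiplier $\mu^\diamond\in\mathbb R$, i.e., $\nabla_{\mathbf W}\mathcal L(\mathbf W^\diamond,\mu^\diamond)=\mathbf 0$ where $\mathcal L(\mathbf W,\mu)=f(\mathbf W)-\mu(\mathrm{tr}(\mathbf W\mathbf W^H)-P_t)$, and let $\bm\Sigma_1^\diamond,\bm\Sigma_2^\diamond,\mathbf Q^\diamond$ be the quantities of the context evaluated at $\mathbf W^\diamond$. Then $$\Big(\tfrac12\delta_s(\mathbf Q^\diamond+\mathbf Q^{\diamond H})-\delta_c\mathbf H\bm\Sigma_2^\diamond\mathbf H^H\Big)\mathbf W_s^\diamond=\mu^\diamond\mathbf W_s^\diamond,$$ and, provided the matrix $\mu^\diamond\mathbf I+\delta_c\mathbf H\bm\Sigma_2^\diamond\mathbf H^H-\frac12\delta_s(\mathbf Q^\diamond+\mathbf Q^{\diamond H})$ is invertible, $$\mathbf W_c^\diamond=\Big(\mu^\diamond\mathbf I+\delta_c\mathbf H\bm\Sigma_2^\diamond\mathbf H^H-\tfrac12\delta_s(\mathbf Q^\diamond+\mathbf Q^{\diamond H})\Big)^{-1}\delta_c\mathbf H\bm\Sigma_1^{\diamond H}.$$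
   Context: Positive integers $N_t,N_r,K,M,L$, nonnegative integer $N_s$; channels $\mathbf h_k\in\mathbb C^{N_t}$, $\mathbf H=[\mathbf h_1,\dots,\mathbf h_K]$, noise variances $\sigma_{ck}^2>0$; $\sigma_s^2>0$; weights $\delta_c,\delta_s\ge0$; $P_t>0$. $\mathbf W=[\mathbf W_c,\mathbf W_s]\in\mathbb C^{N_t\times(K+N_s)}$, $\mathbf W_c=[\mathbf w_{c1},\dots,\mathbf w_{cK}]$, $\mathbf R_x=\mathbf W\mathbf W^H$. Rate $R_k(\mathbf W)=\log(1+|\mathbf h_k^H\mathbf w_{ck}|^2/I_k)$, $I_k=\sum_{j\ne k}|\mathbf h_k^H\mathbf w_{cj}|^2+\|\mathbf h_k^H\mathbf W_s\|_F^2+\sigma_{ck}^2$. Sensing model: differentiable $\mathbf a:\mathbb R^2\to\mathbb C^{N_t}$, $\mathbf b:\mathbb R^2\to\mathbb C^{N_r}$; parameters $\theta_m,\phi_m\in\mathbb R,\alpha_m\in\mathbb C$; $\mathbf A=[\mathbf a(\theta_m,\phi_m)]_m$, $\mathbf B=[\mathbf b(\theta_m,\phi_m)]_m$, $\mathbf U=\mathrm{diag}(\alpha_m)$; $\dot{\mathbf A}_\theta,\dot{\mathbf A}_\phi,\dot{\mathbf B}_\theta,\dot{\mathbf B}_\phi$ have $m$-th columns the partial derivatives of $\mathbf a$ resp. $\mathbf b$ w.r.t. first resp. second argument at $(\theta_m,\phi_m)$. $\mathbf F(\mathbf W)=\frac{2L}{\sigma_s^2}\begin{bmatrix}\Re\mathbf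 F_{11}&\Re\mathbf F_{12}&\Re\mathbf F_{13}&-\Im\mathbf F_{13}\\ \Re\mathbf F_{12}^{\mathsf T}&\Re\mathbf F_{22}&\Re\mathbf F_{23}&-\Im\mathbf F_{23}\\ \Re\mathbf F_{13}^{\mathsf T}&\Re\mathbf F_{23}^{\mathsf T}&\Re\mathbf F_{33}&-\Im\mathbf F_{33}\\ -\Im\mathbf F_{13}^{\mathsf T}&-\Im\mathbf F_{23}^{\mathsf T}&-\Im\mathbf F_{33}^{\mathsf T}&\Re\mathbf F_{33}\end{bmatrix}$ with $\mathbf F_{11}=(\mathbf U\mathbf A^H\mathbf R_x\mathbf A\mathbf U^H)^{\mathsf T}\odot(\dot{\mathbf B}_\theta^H\dot{\mathbf B}_\theta)+(\mathbf U\mathbf A^H\mathbf R_x\dot{\mathbf A}_\theta\mathbf U^H)^{\mathsf T}\odot(\mathbf B^H\dot{\mathbf B}_\theta)+(\mathbf U\dot{\mathbf A}_\theta^H\mathbf R_x\mathbf A\mathbf U^H)^{\mathsf T}\odot(\dot{\mathbf B}_\theta^H\mathbf B)+(\mathbf U\dot{\mathbf A}_\theta^H\mathbf R_x\dot{\mathbf A}_\theta\mathbf U^H)^{\mathsf T}\odot(\mathbf B^H\mathbf B)$; $\mathbf F_{12}=(\mathbf U\mathbf A^H\mathbf R_x\mathbf A\mathbf U^H)^{\mathsf T}\odot(\dot{\mathbf B}_\theta^H\dot{\mathbf B}_\phi)+(\mathbf U\mathbf A^H\mathbf R_x\dot{\mathbf A}_\theta\mathbf U^H)^{\mathsf T}\odot(\mathbf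 B^H\dot{\mathbf B}_\phi)+(\mathbf U\dot{\mathbf A}_\phi^H\mathbf R_x\mathbf A\mathbf U^H)^{\mathsf T}\odot(\dot{\mathbf B}_\theta^H\mathbf B)+(\mathbf U\dot{\mathbf A}_\phi^H\mathbf R_x\dot{\mathbf A}_\theta\mathbf U^H)^{\mathsf T}\odot(\mathbf B^H\mathbf B)$; $\mathbf F_{22}$ = $\mathbf F_{11}$ with $\theta\to\phi$; $\mathbf F_{13}=(\mathbf A^H\mathbf R_x\mathbf A\mathbf U^H)^{\mathsf T}\odot(\dot{\mathbf B}_\theta^H\mathbf B)+(\mathbf A^H\mathbf R_x\dot{\mathbf A}_\theta\mathbf U^H)^{\mathsf T}\odot(\mathbf B^H\mathbf B)$; $\mathbf F_{23}$ = $\mathbf F_{13}$ with $\theta\to\phi$; $\mathbf F_{33}=(\mathbf A^H\mathbf R_x\mathbf A)^{\mathsf T}\odot(\mathbf B^H\mathbf B)$. $f(\mathbf W)=\delta_c\sum_kR_k(\mathbf W)-\delta_s\mathrm{tr}(\mathbf F(\mathbf W)^{-1})$ ($\mathbf F$ assumed invertible at the points considered). Gradient convention: $\nabla g=\partial g/\partial\Re\mathbf W+\mathrm j\,\partial g/\partial\Im\mathbf W$. Quantities at $\mathbf W$: $T_k=I_k+|\mathbf h_k^H\mathbf w_{ck}|^2$, $\xi_k=|\mathbf h_k^H\mathbf w_{ck}|^2/I_k$, $\eta_k=\overline{\mathbf h_k^H\mathbf w_{ck}}/I_k$, $\beta_k=\xi_k/T_k$, $\bm\Sigma_1=\mathrm{diag}(\eta_k)$,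 $\bm\Sigma_2=\mathrm{diag}(\beta_k)$; $\bm\Phi=\mathbf F(\mathbf W)^{-2}$ with $M\times M$ blocks $\bm\Phi_{pq}$; $\mathbf Q_{11}=\mathbf A\mathbf U^H(\bm\Phi_{11}\odot\dot{\mathbf B}_\theta^H\dot{\mathbf B}_\theta)\mathbf U\mathbf A^H+\dot{\mathbf A}_\theta\mathbf U^H(\bm\Phi_{11}\odot\mathbf B^H\dot{\mathbf B}_\theta)\mathbf U\mathbf A^H+\mathbf A\mathbf U^H(\bm\Phi_{11}\odot\dot{\mathbf B}_\theta^H\mathbf B)\mathbf U\dot{\mathbf A}_\theta^H+\dot{\mathbf A}_\theta\mathbf U^H(\bm\Phi_{11}\odot\mathbf B^H\mathbf B)\mathbf U\dot{\mathbf A}_\theta^H$; $\mathbf Q_{12}=2[\mathbf A\mathbf U^H(\bm\Phi_{12}\odot\dot{\mathbf B}_\theta^H\dot{\mathbf B}_\phi)\mathbf U\mathbf A^H+\dot{\mathbf A}_\theta\mathbf U^H(\bm\Phi_{12}\odot\mathbf B^H\dot{\mathbf B}_\phi)\mathbf U\mathbf A^H+\mathbf A\mathbf U^H(\bm\Phi_{12}\odot\dot{\mathbf B}_\theta^H\mathbf B)\mathbf U\dot{\mathbf A}_\phi^H+\dot{\mathbf A}_\theta\mathbf U^H(\bm\Phi_{12}\odot\mathbf B^H\mathbf B)\mathbf U\dot{\mathbf A}_\phi^H]$; $\mathbf Q_{22}$ = $\mathbf Q_{11}$ with $\bm\Phi_{11}\to\bm\Phi_{22}$, $\theta\to\phi$;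 $\mathbf Q_{13}=\mathbf A\mathbf U^H((2\bm\Phi_{13}+2\mathrm j\bm\Phi_{14})\odot\dot{\mathbf B}_\theta^H\mathbf B)\mathbf A^H+\dot{\mathbf A}_\theta\mathbf U^H((2\bm\Phi_{13}+2\mathrm j\bm\Phi_{14})\odot\mathbf B^H\mathbf B)\mathbf A^H$; $\mathbf Q_{23}$ = $\mathbf Q_{13}$ with $\bm\Phi_{13},\bm\Phi_{14}\to\bm\Phi_{23},\bm\Phi_{24}$, $\theta\to\phi$; $\mathbf Q_{33}=\mathbf A((\bm\Phi_{33}+\bm\Phi_{44}+2\mathrm j\bm\Phi_{34})\odot\mathbf B^H\mathbf B)\mathbf A^H$; $\mathbf Q=\frac{2L}{\sigma_s^2}(\mathbf Q_{11}+\mathbf Q_{12}+\mathbf Q_{13}+\mathbf Q_{22}+\mathbf Q_{23}+\mathbf Q_{33})$; $\mathrm j$ imaginary unit. *)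

theory Defs
  imports "HOL-Analysis.Analysis"
    "Jordan_Normal_Form.Gauss_Jordan_Elimination"
    "Jordan_Normal_Form.Schur_Decomposition"
begin

abbreviation cH :: "complex mat \<Rightarrow> complex mat" where
  "cH A \<equiv> mat_adjoint A"

definition hadamard :: "'a::times mat \<Rightarrow> 'a mat \<Rightarrow> 'a mat" (infixl "\<odot>" 71) where
  "A \<odot> B = mat (dim_row A) (dim_col A) (\<lambda>(i,j). A $$ (i,j) * B $$ (i,j))"

definition mtrace :: "'a::comm_ring_1 mat \<Rightarrow> 'a" where
  "mtrace A = (\<Sum>i<dim_row A. A $$ (i,i))"

text \<open>Matrix inverse (only used at invertible matrices).\<close>
definition minv :: "'a::field mat \<Rightarrow> 'a mat" where
  "minv A = the (mat_inverse A)"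

definition Re_mat :: "complex mat \<Rightarrow> real mat" where
  "Re_mat A = map_mat Re A"

definition Im_mat :: "complex mat \<Rightarrow> real mat" where
  "Im_mat A = map_mat Im A"

definition cmat :: "real mat \<Rightarrow> complex mat" where
  "cmat A = map_mat complex_of_real A"

definition diagc :: "nat \<Rightarrow> (nat \<Rightarrow> complex) \<Rightarrow> complex mat" where
  "diagc n d = mat n n (\<lambda>(i,j). if i = j then d i else 0)"

definition block4 :: "nat \<Rightarrow> real mat list list \<Rightarrow> real mat" where
  "block4 M bl = mat (4*M) (4*M) (\<lambda>(i,j). (bl ! (i div M) ! (j div M)) $$ (i mod M, j mod M))"

text \<open>Block (p,q) of a 4M x 4M matrix, with 1-based block indices p,q as in the paper.\<close>
definition blk :: "nat \<Rightarrow> real mat \<Rightarrow> nat \<Rightarrow> nat \<Rightarrow> real mat" where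
  "blk M Phi p q = mat M M (\<lambda>(r,c). Phi $$ ((p-1)*M + r, (q-1)*M + c))"

definition Wc_of :: "nat \<Rightarrow> complex mat \<Rightarrow> complex mat" where
  "Wc_of K W = mat (dim_row W) K (\<lambda>(i,j). W $$ (i,j))"

definition Ws_of :: "nat \<Rightarrow> complex mat \<Rightarrow> complex mat" where
  "Ws_of K W = mat (dim_row W) (dim_col W - K) (\<lambda>(i,j). W $$ (i, K + j))"

text \<open>h_k^H w_j = (H^H W)_{kj}, h_k the k-th column of H.\<close>
definition hw :: "complex mat \<Rightarrow> complex mat \<Rightarrow> nat \<Rightarrow> nat \<Rightarrow> complex" where
  "hw H W k j = (cH H * W) $$ (k,j)"

text \<open>Interference-plus-noise I_k; sc2 k is the noise variance sigma_ck^2.\<close>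
definition Iint :: "nat \<Rightarrow> complex mat \<Rightarrow> (nat \<Rightarrow> real) \<Rightarrow> complex mat \<Rightarrow> nat \<Rightarrow> real" where
  "Iint K H sc2 W k =
     (\<Sum>j\<in>{..<K} - {k}. (cmod (hw H (Wc_of K W) k j))^2)
     + (\<Sum>j<dim_col (Ws_of K W). (cmod (hw H (Ws_of K W) k j))^2)
     + sc2 k"

definition rate :: "nat \<Rightarrow> complex mat \<Rightarrow> (nat \<Rightarrow> real) \<Rightarrow> complex mat \<Rightarrow> nat \<Rightarrow> real" where
  "rate K H sc2 W k = ln (1 + (cmod (hw H (Wc_of K W) k k))^2 / Iint K H sc2 W k)"

definition Tk :: "nat \<Rightarrow> complex mat \<Rightarrow> (nat \<Rightarrow> real) \<Rightarrow> complex mat \<Rightarrow> nat \<Rightarrow> real" where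
  "Tk K H sc2 W k = Iint K H sc2 W k + (cmod (hw H (Wc_of K W) k k))^2"

definition xi :: "nat \<Rightarrow> complex mat \<Rightarrow> (nat \<Rightarrow> real) \<Rightarrow> complex mat \<Rightarrow> nat \<Rightarrow> real" where
  "xi K H sc2 W k = (cmod (hw H (Wc_of K W) k k))^2 / Iint K H sc2 W k"

definition eta :: "nat \<Rightarrow> complex mat \<Rightarrow> (nat \<Rightarrow> real) \<Rightarrow> complex mat \<Rightarrow> nat \<Rightarrow> complex" where
  "eta K H sc2 W k = cnj (hw H (Wc_of K W) k k) / complex_of_real (Iint K H sc2 W k)"

definition beta :: "nat \<Rightarrow> complex mat \<Rightarrow> (nat \<Rightarrow> real) \<Rightarrow> complex mat \<Rightarrow> nat \<Rightarrow> real" where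
  "beta K H sc2 W k = xi K H sc2 W k / Tk K H sc2 W k"

definition Sigma1 :: "nat \<Rightarrow> complex mat \<Rightarrow> (nat \<Rightarrow> real) \<Rightarrow> complex mat \<Rightarrow> complex mat" where
  "Sigma1 K H sc2 W = diagc K (eta K H sc2 W)"

definition Sigma2 :: "nat \<Rightarrow> complex mat \<Rightarrow> (nat \<Rightarrow> real) \<Rightarrow> complex mat \<Rightarrow> complex mat" where
  "Sigma2 K H sc2 W = diagc K (\<lambda>k. complex_of_real (beta K H sc2 W k))"

text \<open>Steering vectors given componentwise: a i th ph is the i-th entry of a(th,ph).\<close>
definition steer :: "nat \<Rightarrow> nat \<Rightarrow> (nat \<Rightarrow> real \<Rightarrow> real \<Rightarrow> complex) \<Rightarrow> (nat \<Rightarrow> real) \<Rightarrow> (nat \<Rightarrow> real) \<Rightarrow> complex mat" where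
  "steer N M a th ph = mat N M (\<lambda>(i,m). a i (th m) (ph m))"

definition steer_dth :: "nat \<Rightarrow> nat \<Rightarrow> (nat \<Rightarrow> real \<Rightarrow> real \<Rightarrow> complex) \<Rightarrow> (nat \<Rightarrow> real) \<Rightarrow> (nat \<Rightarrow> real) \<Rightarrow> complex mat" where
  "steer_dth N M a th ph = mat N M (\<lambda>(i,m). vector_derivative (\<lambda>t. a i t (ph m)) (at (th m)))"

definition steer_dph :: "nat \<Rightarrow> nat \<Rightarrow> (nat \<Rightarrow> real \<Rightarrow> real \<Rightarrow> complex) \<Rightarrow> (nat \<Rightarrow> real) \<Rightarrow> (nat \<Rightarrow> real) \<Rightarrow> complex mat" where
  "steer_dph N M a th ph = mat N M (\<lambda>(i,m). vector_derivative (\<lambda>t. a i (th m) t) (at (ph m)))"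

record sensing =
  sA :: "complex mat"  sAt :: "complex mat"  sAp :: "complex mat"
  sB :: "complex mat"  sBt :: "complex mat"  sBp :: "complex mat"
  sU :: "complex mat"

definition sensing_of ::
  "nat \<Rightarrow> nat \<Rightarrow> nat \<Rightarrow> (nat \<Rightarrow> real \<Rightarrow> real \<Rightarrow> complex) \<Rightarrow> (nat \<Rightarrow> real \<Rightarrow> real \<Rightarrow> complex)
   \<Rightarrow> (nat \<Rightarrow> real) \<Rightarrow> (nat \<Rightarrow> real) \<Rightarrow> (nat \<Rightarrow> complex) \<Rightarrow> sensing" where
  "sensing_of Nt Nr M a b th ph al =
    \<lparr> sA = steer Nt M a th ph, sAt = steer_dth Nt M a th ph, sAp = steer_dph Nt M a th ph,
      sB = steer Nr M b th ph, sBt = steer_dth Nr M b th ph, sBp = steer_dph Nr M b th ph,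
      sU = diagc M al \<rparr>"

text \<open>F_11 (with Ad = dA_theta, Bd = dB_theta); F_22 is the same with phi-derivatives.\<close>
definition F11g :: "sensing \<Rightarrow> complex mat \<Rightarrow> complex mat \<Rightarrow> complex mat \<Rightarrow> complex mat" where
  "F11g S Rx Ad Bd = (let A = sA S; B = sB S; U = sU S in
      transpose_mat (U * cH A * Rx * A * cH U) \<odot> (cH Bd * Bd)
    + transpose_mat (U * cH A * Rx * Ad * cH U) \<odot> (cH B * Bd)
    + transpose_mat (U * cH Ad * Rx * A * cH U) \<odot> (cH Bd * B)
    + transpose_mat (U * cH Ad * Rx * Ad * cH U) \<odot> (cH B * B))"

definition F12m :: "sensing \<Rightarrow> complex mat \<Rightarrow> complex mat" where
  "F12m S Rx = (let A = sA S; B = sB S; U = sU S; At = sAt S; Ap = sAp S; Bt = sBt S; Bp = sBp S in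
      transpose_mat (U * cH A * Rx * A * cH U) \<odot> (cH Bt * Bp)
    + transpose_mat (U * cH A * Rx * At * cH U) \<odot> (cH B * Bp)
    + transpose_mat (U * cH Ap * Rx * A * cH U) \<odot> (cH Bt * B)
    + transpose_mat (U * cH Ap * Rx * At * cH U) \<odot> (cH B * B))"

definition F13g :: "sensing \<Rightarrow> complex mat \<Rightarrow> complex mat \<Rightarrow> complex mat \<Rightarrow> complex mat" where
  "F13g S Rx Ad Bd = (let A = sA S; B = sB S; U = sU S in
      transpose_mat (cH A * Rx * A * cH U) \<odot> (cH Bd * B)
    + transpose_mat (cH A * Rx * Ad * cH U) \<odot> (cH B * B))"

definition F33m :: "sensing \<Rightarrow> complex mat \<Rightarrow> complex mat" where
  "F33m S Rx = transpose_mat (cH (sA S) * Rx * sA S) \<odot> (cH (sB S) * sB S)"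

definition FIM :: "nat \<Rightarrow> nat \<Rightarrow> real \<Rightarrow> sensing \<Rightarrow> complex mat \<Rightarrow> real mat" where
  "FIM M L ss2 S W = (let Rx = W * cH W;
      F11 = F11g S Rx (sAt S) (sBt S); F22 = F11g S Rx (sAp S) (sBp S);
      F12 = F12m S Rx;
      F13 = F13g S Rx (sAt S) (sBt S); F23 = F13g S Rx (sAp S) (sBp S);
      F33 = F33m S Rx;
      T = transpose_mat in
    (2 * real L / ss2) \<cdot>\<^sub>m block4 M
      [[Re_mat F11, Re_mat F12, Re_mat F13, - Im_mat F13],
       [T (Re_mat F12), Re_mat F22, Re_mat F23, - Im_mat F23],
       [T (Re_mat F13), T (Re_mat F23), Re_mat F33, - Im_mat F33],
       [- T (Im_mat F13), - T (Im_mat F23), - T (Im_mat F33), Re_mat F33]])"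

definition fobj :: "nat \<Rightarrow> complex mat \<Rightarrow> (nat \<Rightarrow> real) \<Rightarrow> nat \<Rightarrow> nat \<Rightarrow> real \<Rightarrow> sensing
   \<Rightarrow> real \<Rightarrow> real \<Rightarrow> complex mat \<Rightarrow> real" where
  "fobj K H sc2 M L ss2 S dc ds W =
     dc * (\<Sum>k<K. rate K H sc2 W k) - ds * mtrace (minv (FIM M L ss2 S W))"

definition Lag :: "nat \<Rightarrow> complex mat \<Rightarrow> (nat \<Rightarrow> real) \<Rightarrow> nat \<Rightarrow> nat \<Rightarrow> real \<Rightarrow> sensing
   \<Rightarrow> real \<Rightarrow> real \<Rightarrow> real \<Rightarrow> complex mat \<Rightarrow> real \<Rightarrow> real" where
  "Lag K H sc2 M L ss2 S dc ds Pt W mu =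
     fobj K H sc2 M L ss2 S dc ds W - mu * (Re (mtrace (W * cH W)) - Pt)"

definition unitm :: "nat \<Rightarrow> nat \<Rightarrow> nat \<Rightarrow> nat \<Rightarrow> complex mat" where
  "unitm n m i j = mat n m (\<lambda>p. if p = (i,j) then 1 else 0)"

text \<open>Gradient (d/d Re W + j d/d Im W) of a real function g of W (n x m) vanishes at W:
  all real partial derivatives w.r.t. real and imaginary parts of each entry exist and are 0.\<close>
definition grad_zero :: "nat \<Rightarrow> nat \<Rightarrow> (complex mat \<Rightarrow> real) \<Rightarrow> complex mat \<Rightarrow> bool" where
  "grad_zero n m g W \<longleftrightarrow> (\<forall>i<n. \<forall>j<m.
     ((\<lambda>t. g (W + complex_of_real t \<cdot>\<^sub>m unitm n m i j)) has_real_derivative 0) (at 0) \<and>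
     ((\<lambda>t. g (W + (\<i> * complex_of_real t) \<cdot>\<^sub>m unitm n m i j)) has_real_derivative 0) (at 0))"

definition Q11g :: "sensing \<Rightarrow> complex mat \<Rightarrow> complex mat \<Rightarrow> complex mat \<Rightarrow> complex mat" where
  "Q11g S P Ad Bd = (let A = sA S; B = sB S; U = sU S in
      A * cH U * (P \<odot> (cH Bd * Bd)) * U * cH A
    + Ad * cH U * (P \<odot> (cH B * Bd)) * U * cH A
    + A * cH U * (P \<odot> (cH Bd * B)) * U * cH Ad
    + Ad * cH U * (P \<odot> (cH B * B)) * U * cH Ad)"

definition Q12m :: "sensing \<Rightarrow> complex mat \<Rightarrow> complex mat" where
  "Q12m S P = (let A = sA S; B = sB S; U = sU S; At = sAt S; Ap = sAp S; Bt = sBt S; Bp = sBp S in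
    2 \<cdot>\<^sub>m (A * cH U * (P \<odot> (cH Bt * Bp)) * U * cH A
    + At * cH U * (P \<odot> (cH B * Bp)) * U * cH A
    + A * cH U * (P \<odot> (cH Bt * B)) * U * cH Ap
    + At * cH U * (P \<odot> (cH B * B)) * U * cH Ap))"

definition Q13g :: "sensing \<Rightarrow> complex mat \<Rightarrow> complex mat \<Rightarrow> complex mat \<Rightarrow> complex mat \<Rightarrow> complex mat" where
  "Q13g S P3 P4 Ad Bd = (let A = sA S; B = sB S; U = sU S; P = 2 \<cdot>\<^sub>m P3 + (2 * \<i>) \<cdot>\<^sub>m P4 in
      A * cH U * (P \<odot> (cH Bd * B)) * cH A
    + Ad * cH U * (P \<odot> (cH B * B)) * cH A)"

definition Q33m :: "sensing \<Rightarrow> complex mat \<Rightarrow> complex mat \<Rightarrow> complex mat \<Rightarrow> complex mat" where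
  "Q33m S P33 P44 P34 = sA S * ((P33 + P44 + (2 * \<i>) \<cdot>\<^sub>m P34) \<odot> (cH (sB S) * sB S)) * cH (sA S)"

definition Qmat :: "nat \<Rightarrow> nat \<Rightarrow> real \<Rightarrow> sensing \<Rightarrow> complex mat \<Rightarrow> complex mat" where
  "Qmat M L ss2 S W = (let Finv = minv (FIM M L ss2 S W); Phi = Finv * Finv;
      P = (\<lambda>p q. cmat (blk M Phi p q)) in
    complex_of_real (2 * real L / ss2) \<cdot>\<^sub>m
      (Q11g S (P 1 1) (sAt S) (sBt S) + Q12m S (P 1 2) + Q13g S (P 1 3) (P 1 4) (sAt S) (sBt S)
     + Q11g S (P 2 2) (sAp S) (sBp S) + Q13g S (P 2 3) (P 2 4) (sAp S) (sBp S)
     + Q33m S (P 3 3) (P 4 4) (P 3 4)))"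

end

theory Submission
  imports Defs
begin

lemma cH_dims[simp]: "dim_row (cH A) = dim_col A" "dim_col (cH A) = dim_row A"
  by (auto simp: mat_adjoint_def)

lemma cH_index[simp]: "i < dim_col A \<Longrightarrow> j < dim_row A \<Longrightarrow> cH A $$ (i,j) = cnj (A $$ (j,i))"
  by (simp add: mat_adjoint_def mat_of_rows_index)

lemma cH_carrier[simp]: "A \<in> carrier_mat n m \<Longrightarrow> cH A \<in> carrier_mat m n"
  by auto


lemma mult_idx: "i < dim_row A \<Longrightarrow> j < dim_col B \<Longrightarrow> dim_col A = dim_row B \<Longrightarrow> (A*B)$$(i,j) = (\<Sum>k<dim_row B. A$$(i,k) * B$$(k,j))"
  by (simp add: scalar_prod_def atLeast0LessThan)

lemma mtrace_comm: assumes "A \<in> carrier_mat n m" "B \<in> carrier_mat m n"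
  shows "mtrace (A*B) = mtrace (B*A)"
proof -
  have "mtrace (A*B) = (\<Sum>i<n. \<Sum>k<m. A$$(i,k) * B$$(k,i))"
    using assms by (simp add: mtrace_def mult_idx del: index_mult_mat(1))
  also have "\<dots> = (\<Sum>k<m. \<Sum>i<n. B$$(k,i) * A$$(i,k))"
    by (subst sum.swap) (simp add: mult.commute)
  also have "\<dots> = mtrace (B*A)"
    using assms by (simp add: mtrace_def mult_idx del: index_mult_mat(1))
  finally show ?thesis .
qed

lemma cH_cH[simp]: "cH (cH A) = A"
  by (rule eq_matI) auto

lemma cH_mult: assumes "A \<in> carrier_mat n m" "B \<in> carrier_mat m p"
  shows "cH (A * B) = cH B * cH A"
  apply (rule eq_matI)
  using assms by (auto simp: mult_idx sum_distrib_left mult.commute simp del: index_mult_mat(1))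

lemma invertible_det: assumes "invertible_mat (A::'a::field mat)" "A \<in> carrier_mat n n"
  shows "det A \<noteq> 0"
proof -
  from assms obtain B where AB: "A * B = 1\<^sub>m n" and BA: "B * A = 1\<^sub>m (dim_row B)"
    unfolding invertible_mat_def inverts_mat_def by auto
  have c: "dim_col B = n" using arg_cong[OF AB, of dim_col] by simp
  have r: "dim_row B = n" using arg_cong[OF BA, of dim_col] assms by simp
  have B: "B \<in> carrier_mat n n" using c r by auto
  have "det (A*B) = det A * det B" by (rule det_mult[OF assms(2) B])
  with AB show ?thesis by auto
qed

lemma minv_props: assumes A: "A \<in> carrier_mat n n" and d: "det A \<noteq> (0::'a::field)"
  shows "minv A \<in> carrier_mat n n" "A * minv A = 1\<^sub>m n" "minv A * A = 1\<^sub>m n"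
proof -
  have U: "A \<in> Units (ring_mat TYPE('a) n undefined)" by (rule det_non_zero_imp_unit[OF A d])
  have "mat_inverse A \<noteq> None"
  proof
    assume N: "mat_inverse A = None"
    show False using mat_inverse(1)[OF A N, where b=undefined] U by blast
  qed
  then obtain B where B: "mat_inverse A = Some B" by auto
  hence "A * B = 1\<^sub>m n \<and> B * A = 1\<^sub>m n \<and> B \<in> carrier_mat n n" by (rule mat_inverse(2)[OF A])
  moreover have "minv A = B" using B by (simp add: minv_def)
  ultimately show "minv A \<in> carrier_mat n n" "A * minv A = 1\<^sub>m n" "minv A * A = 1\<^sub>m n" by auto
qed

lemma minv_adj: assumes A: "A \<in> carrier_mat n n" and d: "det A \<noteq> (0::'a::field)"
  shows "minv A = (1 / det A) \<cdot>\<^sub>m adj_mat A"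
proof -
  note P = minv_props[OF A d]
  have adj: "adj_mat A \<in> carrier_mat n n" "A * adj_mat A = det A \<cdot>\<^sub>m 1\<^sub>m n" using adj_mat[OF A] by auto
  have X: "(1 / det A) \<cdot>\<^sub>m adj_mat A \<in> carrier_mat n n" using adj by simp
  have "A * ((1 / det A) \<cdot>\<^sub>m adj_mat A) = (1 / det A) \<cdot>\<^sub>m (A * adj_mat A)"
    by (rule mult_smult_distrib[OF A adj(1)])
  also have "\<dots> = 1\<^sub>m n" unfolding adj(2) using d by (intro eq_matI) auto
  finally have AX: "A * ((1 / det A) \<cdot>\<^sub>m adj_mat A) = 1\<^sub>m n" .
  have "minv A = minv A * (A * ((1 / det A) \<cdot>\<^sub>m adj_mat A))" unfolding AX using P by simp
  also have "\<dots> = (minv A * A) * ((1 / det A) \<cdot>\<^sub>m adj_mat A)"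
    using P(1) A X by (simp add: assoc_mult_mat)
  also have "\<dots> = (1 / det A) \<cdot>\<^sub>m adj_mat A" unfolding P(3) using left_mult_one_mat[OF X] .
  finally show ?thesis .
qed

lemma det_cont: fixes F :: "real \<Rightarrow> real mat"
  assumes c: "\<And>t. F t \<in> carrier_mat n n"
    and e: "\<And>i j. i < n \<Longrightarrow> j < n \<Longrightarrow> continuous (at x) (\<lambda>t. F t $$ (i,j))"
  shows "continuous (at x) (\<lambda>t. det (F t))"
proof -
  have eq: "(\<lambda>t. det (F t)) = (\<lambda>t. \<Sum> p \<in> {p. p permutes {0 ..< n}}. signof p * (\<Prod> i = 0 ..< n. F t $$ (i, p i)))"
    using det_def'[OF c] by auto
  show ?thesis unfolding eq
  proof (intro continuous_sum continuous_mult continuous_const continuous_prod)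
    fix p i assume p: "p \<in> {p. p permutes {0 ..< n}}" and i: "i \<in> {0..<n}"
    have "p i < n" using p i permutes_in_image[of p "{0..<n}" i] by auto
    thus "continuous (at x) (\<lambda>t. F t $$ (i, p i))" using e i by auto
  qed
qed

lemma adj_cont: fixes F :: "real \<Rightarrow> real mat"
  assumes c: "\<And>t. F t \<in> carrier_mat n n"
    and e: "\<And>i j. i < n \<Longrightarrow> j < n \<Longrightarrow> continuous (at x) (\<lambda>t. F t $$ (i,j))"
    and ij: "i < n" "j < n"
  shows "continuous (at x) (\<lambda>t. adj_mat (F t) $$ (i,j))"
proof -
  have eq: "(\<lambda>t. adj_mat (F t) $$ (i,j)) = (\<lambda>t. (-1)^(j+i) * det (mat_delete (F t) j i))"
  proof
    fix t have "dim_row (F t) = n" "dim_col (F t) = n" using c[of t] by auto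
    then show "adj_mat (F t) $$ (i,j) = (-1)^(j+i) * det (mat_delete (F t) j i)"
      using ij by (auto simp: adj_mat_def cofactor_def)
  qed
  have "continuous (at x) (\<lambda>t. det (mat_delete (F t) j i))"
  proof (rule det_cont[of _ "n-1"])
    show "\<And>t. mat_delete (F t) j i \<in> carrier_mat (n - 1) (n - 1)" using c mat_delete_carrier by blast
    fix a b assume "a < n - 1" "b < n - 1"
    assume ab: "a < n - 1" "b < n - 1"
    have dr: "\<And>t. dim_row (F t) = n" "\<And>t. dim_col (F t) = n" using c by auto
    have "(\<lambda>t. mat_delete (F t) j i $$ (a, b)) = (\<lambda>t. F t $$ (if a < j then a else Suc a, if b < i then b else Suc b))"
      using ab by (auto simp: mat_delete_def dr)
    moreover have "continuous (at x) (\<lambda>t. F t $$ (if a < j then a else Suc a, if b < i then b else Suc b))"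
      using ab by (intro e) auto
    ultimately show "continuous (at x) (\<lambda>t. mat_delete (F t) j i $$ (a, b))" by simp
  qed
  then show ?thesis unfolding eq by (intro continuous_intros)
qed

lemma mtrace_add: "A \<in> carrier_mat n n \<Longrightarrow> B \<in> carrier_mat n n \<Longrightarrow> mtrace (A + B) = mtrace A + mtrace B"
  by (simp add: mtrace_def sum.distrib)

lemma mtrace_smult: "A \<in> carrier_mat n n \<Longrightarrow> mtrace (a \<cdot>\<^sub>m A) = a * mtrace A"
  by (simp add: mtrace_def sum_distrib_left)

lemma mtrace3: assumes "A \<in> carrier_mat n n" "B \<in> carrier_mat n n" "C \<in> carrier_mat n n"
  shows "mtrace (A * B * C) = (\<Sum>i<n. \<Sum>k<n. (\<Sum>l<n. A $$ (i,l) * B $$ (l,k)) * C $$ (k,i))"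
  using assms by (simp add: mtrace_def mult_idx del: index_mult_mat(1) assoc_mult_mat)

lemma trinv_deriv:
  fixes F0 F1 F2 :: "real mat"
  assumes c: "F0 \<in> carrier_mat n n" "F1 \<in> carrier_mat n n" "F2 \<in> carrier_mat n n" and d: "det F0 \<noteq> 0"
  shows "((\<lambda>t. mtrace (minv (F0 + t \<cdot>\<^sub>m F1 + t^2 \<cdot>\<^sub>m F2))) has_real_derivative
          - mtrace (minv F0 * F1 * minv F0)) (at 0)"
proof -
  define F where "F t = F0 + t \<cdot>\<^sub>m F1 + t^2 \<cdot>\<^sub>m F2" for t
  define H where "H t = F1 + t \<cdot>\<^sub>m F2" for t
  define G0 where "G0 = minv F0"
  have Fc: "\<And>t. F t \<in> carrier_mat n n" using c by (simp add: F_def)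
  have Hc: "\<And>t. H t \<in> carrier_mat n n" using c by (simp add: H_def)
  have Fd[simp]: "\<And>t. dim_row (F t) = n" "\<And>t. dim_col (F t) = n" using Fc by auto
  have Hd[simp]: "\<And>t. dim_row (H t) = n" "\<And>t. dim_col (H t) = n" using Hc by auto
  have Fe: "\<And>t i j. i<n \<Longrightarrow> j<n \<Longrightarrow> F t $$ (i,j) = F0$$(i,j) + t * F1$$(i,j) + t^2 * F2$$(i,j)"
    using c by (simp add: F_def)
  have He: "\<And>t i j. i<n \<Longrightarrow> j<n \<Longrightarrow> H t $$ (i,j) = F1$$(i,j) + t * F2$$(i,j)"
    using c by (simp add: H_def)
  have F0eq: "F 0 = F0" by (rule eq_matI) (use c Fc in \<open>auto simp: Fe\<close>)
  have FtH: "\<And>t. F t = F0 + t \<cdot>\<^sub>m H t"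
    by (rule eq_matI) (use c Fc Hc in \<open>auto simp: Fe He power2_eq_square algebra_simps\<close>)
  have Fcont: "\<And>i j. i<n \<Longrightarrow> j<n \<Longrightarrow> continuous (at 0) (\<lambda>t. F t $$ (i,j))"
  proof -
    fix i j assume ij: "i<n" "j<n"
    have "(\<lambda>t. F t $$ (i,j)) = (\<lambda>t. F0$$(i,j) + t * F1$$(i,j) + t^2 * F2$$(i,j))" using Fe ij by auto
    moreover have "continuous (at 0) (\<lambda>t. F0$$(i,j) + t * F1$$(i,j) + t^2 * F2$$(i,j))"
      by (intro continuous_intros)
    ultimately show "continuous (at 0) (\<lambda>t. F t $$ (i,j))" by simp
  qed
  have detc: "continuous (at 0) (\<lambda>t. det (F t))" by (rule det_cont[OF Fc Fcont])
  have ev: "eventually (\<lambda>t. det (F t) \<noteq> 0) (at 0)"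
  proof -
    have "((\<lambda>t. det (F t)) \<longlongrightarrow> det (F 0)) (at 0)" using detc by (simp add: continuous_at)
    then show ?thesis using d F0eq by (intro tendsto_imp_eventually_ne) auto
  qed
  note G0p = minv_props[OF c(1) d, folded G0_def]
  have key: "mtrace (minv (F t)) - mtrace G0 = - t * mtrace (minv (F t) * H t * G0)"
    if dt: "det (F t) \<noteq> 0" for t
  proof -
    define Gt where "Gt = minv (F t)"
    note Gp = minv_props[OF Fc dt, folded Gt_def]
    have "1\<^sub>m n = Gt * F t" using Gp by simp
    also have "\<dots> = Gt * F0 + t \<cdot>\<^sub>m (Gt * H t)"
      unfolding FtH using Gp c Hc
      by (simp add: mult_add_distrib_mat[OF Gp(1) c(1)] mult_smult_distrib[OF Gp(1) Hc])
    finally have one: "1\<^sub>m n = Gt * F0 + t \<cdot>\<^sub>m (Gt * H t)" .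
    have "G0 = 1\<^sub>m n * G0" using G0p by simp
    also have "\<dots> = Gt * F0 * G0 + t \<cdot>\<^sub>m (Gt * H t * G0)"
      unfolding one using Gp c Hc G0p
      by (simp add: add_mult_distrib_mat[of _ n n] mult_smult_assoc_mat[OF mult_carrier_mat[OF Gp(1) Hc] G0p(1)])
    also have "Gt * F0 * G0 = Gt"
      using Gp c G0p by (simp add: assoc_mult_mat[of _ n n] right_mult_one_mat)
    finally have "G0 = Gt + t \<cdot>\<^sub>m (Gt * H t * G0)" .
    then have "mtrace G0 = mtrace (Gt + t \<cdot>\<^sub>m (Gt * H t * G0))" by (rule arg_cong)
    also have "\<dots> = mtrace Gt + t * mtrace (Gt * H t * G0)"
    proof -
      have X: "Gt * H t * G0 \<in> carrier_mat n n" using Gp Hc G0p by auto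
      show ?thesis using mtrace_add[OF Gp(1) smult_carrier_mat[OF X]] mtrace_smult[OF X] by simp
    qed
    finally have "mtrace G0 = mtrace Gt + t * mtrace (Gt * H t * G0)" .
    then show ?thesis unfolding Gt_def by simp
  qed
  have Gt: "((\<lambda>t. minv (F t) $$ (i,j)) \<longlongrightarrow> G0 $$ (i,j)) (at 0)" if ij: "i<n" "j<n" for i j
  proof -
    have e1: "eventually (\<lambda>t. adj_mat (F t) $$ (i,j) / det (F t) = minv (F t) $$ (i,j)) (at 0)"
      using ev
    proof (rule eventually_mono)
      fix t assume "det (F t) \<noteq> 0"
      then show "adj_mat (F t) $$ (i,j) / det (F t) = minv (F t) $$ (i,j)"
      proof -
        have "dim_row (adj_mat (F t)) = n" "dim_col (adj_mat (F t)) = n" using adj_mat(1)[OF Fc, of t] by auto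
        then show ?thesis using minv_adj[OF Fc] ij \<open>det (F t) \<noteq> 0\<close> by simp
      qed
    qed
    have "continuous (at 0) (\<lambda>t. adj_mat (F t) $$ (i,j) / det (F t))"
      using adj_cont[OF Fc Fcont ij] detc d F0eq by (intro continuous_intros) auto
    then have "((\<lambda>t. adj_mat (F t) $$ (i,j) / det (F t)) \<longlongrightarrow> adj_mat (F 0) $$ (i,j) / det (F 0)) (at 0)"
      by (simp add: continuous_at)
    moreover have "adj_mat (F 0) $$ (i,j) / det (F 0) = G0 $$ (i,j)"
    proof -
      have "dim_row (adj_mat F0) = n" "dim_col (adj_mat F0) = n" using adj_mat(1)[OF c(1)] by auto
      then show ?thesis unfolding F0eq G0_def using minv_adj[OF c(1) d] ij by simp
    qed
    ultimately show ?thesis using e1 by (simp add: tendsto_cong)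
  qed
  have Hl: "((\<lambda>t. H t $$ (l,k)) \<longlongrightarrow> F1 $$ (l,k)) (at 0)" if lk: "l<n" "k<n" for l k
  proof -
    have "((\<lambda>t. F1$$(l,k) + t * F2$$(l,k)) \<longlongrightarrow> F1$$(l,k) + 0 * F2$$(l,k)) (at 0)"
      by (intro tendsto_intros)
    then show ?thesis using He lk by simp
  qed
  have lim: "((\<lambda>t. mtrace (minv (F t) * H t * G0)) \<longlongrightarrow> mtrace (G0 * F1 * G0)) (at 0)"
  proof -
    have Gc: "\<And>t. det (F t) \<noteq> 0 \<Longrightarrow> minv (F t) \<in> carrier_mat n n" using minv_props(1)[OF Fc] by blast
    have e2: "eventually (\<lambda>t. (\<Sum>i<n. \<Sum>k<n. (\<Sum>l<n. minv (F t) $$ (i,l) * H t $$ (l,k)) * G0 $$ (k,i))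
       = mtrace (minv (F t) * H t * G0)) (at 0)"
      using ev
    proof (rule eventually_mono)
      fix x assume "det (F x) \<noteq> 0"
      then show "(\<Sum>i<n. \<Sum>k<n. (\<Sum>l<n. minv (F x) $$ (i,l) * H x $$ (l,k)) * G0 $$ (k,i))
       = mtrace (minv (F x) * H x * G0)" using mtrace3[OF Gc[OF \<open>det (F x) \<noteq> 0\<close>] Hc G0p(1)] by simp
    qed
    have "((\<lambda>t. (\<Sum>i<n. \<Sum>k<n. (\<Sum>l<n. minv (F t) $$ (i,l) * H t $$ (l,k)) * G0 $$ (k,i)))
       \<longlongrightarrow> (\<Sum>i<n. \<Sum>k<n. (\<Sum>l<n. G0 $$ (i,l) * F1 $$ (l,k)) * G0 $$ (k,i))) (at 0)"
      by (auto intro!: tendsto_sum tendsto_mult Gt Hl)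
    moreover have "(\<Sum>i<n. \<Sum>k<n. (\<Sum>l<n. G0 $$ (i,l) * F1 $$ (l,k)) * G0 $$ (k,i)) = mtrace (G0 * F1 * G0)"
      using mtrace3[OF G0p(1) c(2) G0p(1)] by simp
    ultimately show ?thesis using e2 by (simp add: tendsto_cong)
  qed
  have "((\<lambda>y. (mtrace (minv (F y)) - mtrace (minv (F 0))) / (y - 0)) \<longlongrightarrow> - mtrace (G0 * F1 * G0)) (at 0)"
  proof -
    have e3: "eventually (\<lambda>y. - mtrace (minv (F y) * H y * G0) = (mtrace (minv (F y)) - mtrace (minv (F 0))) / (y - 0)) (at 0)"
      using ev eventually_at_filter[of "\<lambda>y. y \<noteq> 0" 0 UNIV]
    proof -
      have "eventually (\<lambda>y. y \<noteq> 0) (at (0::real))" by (simp add: eventually_at_filter)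
      with ev show ?thesis
        by eventually_elim (simp add: key[unfolded G0_def] F0eq G0_def)
    qed
    show ?thesis by (rule Lim_transform_eventually[OF tendsto_minus[OF lim] e3])
  qed
  then have "((\<lambda>t. mtrace (minv (F t))) has_real_derivative - mtrace (G0 * F1 * G0)) (at 0)"
    by (simp add: has_field_derivative_iff)
  then show ?thesis unfolding F_def G0_def .
qed

lemma had_dims[simp]: "dim_row (A \<odot> B) = dim_row A" "dim_col (A \<odot> B) = dim_col A"
  by (auto simp: hadamard_def)

lemma had_idx[simp]: "i < dim_row A \<Longrightarrow> j < dim_col A \<Longrightarrow> (A \<odot> B) $$ (i,j) = A $$ (i,j) * B $$ (i,j)"
  by (auto simp: hadamard_def)

lemma had_carrier[simp]: "A \<in> carrier_mat p q \<Longrightarrow> A \<odot> B \<in> carrier_mat p q"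
  by (metis carrier_matD carrier_matI had_dims)

lemma Re_mat_dims[simp]: "dim_row (Re_mat A) = dim_row A" "dim_col (Re_mat A) = dim_col A"
  by (auto simp: Re_mat_def)
lemma Im_mat_dims[simp]: "dim_row (Im_mat A) = dim_row A" "dim_col (Im_mat A) = dim_col A"
  by (auto simp: Im_mat_def)
lemma cmat_dims[simp]: "dim_row (cmat A) = dim_row A" "dim_col (cmat A) = dim_col A"
  by (auto simp: cmat_def)
lemma Re_mat_idx[simp]: "i < dim_row A \<Longrightarrow> j < dim_col A \<Longrightarrow> Re_mat A $$ (i,j) = Re (A $$ (i,j))"
  by (auto simp: Re_mat_def)
lemma Im_mat_idx[simp]: "i < dim_row A \<Longrightarrow> j < dim_col A \<Longrightarrow> Im_mat A $$ (i,j) = Im (A $$ (i,j))"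
  by (auto simp: Im_mat_def)
lemma cmat_idx[simp]: "i < dim_row A \<Longrightarrow> j < dim_col A \<Longrightarrow> cmat A $$ (i,j) = complex_of_real (A $$ (i,j))"
  by (auto simp: cmat_def)
lemma Re_mat_carrier[simp]: "A \<in> carrier_mat p q \<Longrightarrow> Re_mat A \<in> carrier_mat p q"
  by (metis carrier_matD carrier_matI Re_mat_dims)
lemma Im_mat_carrier[simp]: "A \<in> carrier_mat p q \<Longrightarrow> Im_mat A \<in> carrier_mat p q"
  by (metis carrier_matD carrier_matI Im_mat_dims)
lemma cmat_carrier[simp]: "A \<in> carrier_mat p q \<Longrightarrow> cmat A \<in> carrier_mat p q"
  by (metis carrier_matD carrier_matI cmat_dims)

lemma block4_dims[simp]: "dim_row (block4 M bl) = 4*M" "dim_col (block4 M bl) = 4*M"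
  by (auto simp: block4_def)
lemma block4_idx: "i < 4*M \<Longrightarrow> j < 4*M \<Longrightarrow> block4 M bl $$ (i,j) = (bl ! (i div M) ! (j div M)) $$ (i mod M, j mod M)"
  by (auto simp: block4_def)

lemma blk_dims[simp]: "dim_row (blk M P p q) = M" "dim_col (blk M P p q) = M" by (auto simp: blk_def)
lemma blk_idx[simp]: "r < M \<Longrightarrow> c < M \<Longrightarrow> blk M P p q $$ (r,c) = P $$ ((p-1)*M + r, (q-1)*M + c)"
  by (auto simp: blk_def)

definition sdims :: "nat \<Rightarrow> nat \<Rightarrow> nat \<Rightarrow> sensing \<Rightarrow> bool" where
  "sdims Nt Nr M S \<longleftrightarrow> sA S \<in> carrier_mat Nt M \<and> sAt S \<in> carrier_mat Nt M \<and> sAp S \<in> carrier_mat Nt M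
     \<and> sB S \<in> carrier_mat Nr M \<and> sBt S \<in> carrier_mat Nr M \<and> sBp S \<in> carrier_mat Nr M \<and> sU S \<in> carrier_mat M M"

lemma sdims_sensing_of: "sdims Nt Nr M (sensing_of Nt Nr M a b th ph al)"
  by (simp add: sdims_def sensing_of_def steer_def steer_dth_def steer_dph_def diagc_def)

definition FLc :: "nat \<Rightarrow> sensing \<Rightarrow> complex mat \<Rightarrow> real mat" where
  "FLc M S Rx = (let
      F11 = F11g S Rx (sAt S) (sBt S); F22 = F11g S Rx (sAp S) (sBp S);
      F12 = F12m S Rx;
      F13 = F13g S Rx (sAt S) (sBt S); F23 = F13g S Rx (sAp S) (sBp S);
      F33 = F33m S Rx;
      T = transpose_mat in
    block4 M
      [[Re_mat F11, Re_mat F12, Re_mat F13, - Im_mat F13],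
       [T (Re_mat F12), Re_mat F22, Re_mat F23, - Im_mat F23],
       [T (Re_mat F13), T (Re_mat F23), Re_mat F33, - Im_mat F33],
       [- T (Im_mat F13), - T (Im_mat F23), - T (Im_mat F33), Re_mat F33]])"

lemma FIM_FLc: "FIM M L ss2 S W = (2 * real L / ss2) \<cdot>\<^sub>m FLc M S (W * cH W)"
  by (simp add: FIM_def FLc_def Let_def)

definition linC :: "nat \<Rightarrow> (complex mat \<Rightarrow> complex mat) \<Rightarrow> nat \<Rightarrow> nat \<Rightarrow> bool" where
  "linC n f p q \<longleftrightarrow> (\<forall>A \<in> carrier_mat n n. f A \<in> carrier_mat p q)
     \<and> (\<forall>A \<in> carrier_mat n n. \<forall>B \<in> carrier_mat n n. f (A + B) = f A + f B)
     \<and> (\<forall>a. \<forall>A \<in> carrier_mat n n. f (a \<cdot>\<^sub>m A) = a \<cdot>\<^sub>m f A)"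

definition linR :: "nat \<Rightarrow> (complex mat \<Rightarrow> real mat) \<Rightarrow> nat \<Rightarrow> nat \<Rightarrow> bool" where
  "linR n f p q \<longleftrightarrow> (\<forall>A \<in> carrier_mat n n. f A \<in> carrier_mat p q)
     \<and> (\<forall>A \<in> carrier_mat n n. \<forall>B \<in> carrier_mat n n. f (A + B) = f A + f B)
     \<and> (\<forall>a::real. \<forall>A \<in> carrier_mat n n. f (complex_of_real a \<cdot>\<^sub>m A) = a \<cdot>\<^sub>m f A)"

lemma linC_left: "X \<in> carrier_mat p n \<Longrightarrow> linC n (\<lambda>R. X * R) p n"
  unfolding linC_def by (auto simp: mult_add_distrib_mat[of _ p n] mult_smult_distrib[of _ p n])

lemma linC_right: assumes "linC n f p q" "Y \<in> carrier_mat q r" shows "linC n (\<lambda>R. f R * Y) p r"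
  using assms unfolding linC_def by (auto simp: add_mult_distrib_mat[of _ p q] mult_smult_assoc_mat[of _ p q])

lemma linC_add: assumes "linC n f p q" "linC n g p q" shows "linC n (\<lambda>R. f R + g R) p q"
  unfolding linC_def
proof (intro conjI ballI allI)
  fix A :: "complex mat" assume A: "A \<in> carrier_mat n n"
  show "f A + g A \<in> carrier_mat p q" using assms A unfolding linC_def by auto
  fix B :: "complex mat" assume B: "B \<in> carrier_mat n n"
  have c: "f A \<in> carrier_mat p q" "f B \<in> carrier_mat p q" "g A \<in> carrier_mat p q" "g B \<in> carrier_mat p q"
    using assms A B unfolding linC_def by auto
  show "f (A + B) + g (A + B) = f A + g A + (f B + g B)"
    using assms A B unfolding linC_def by (intro eq_matI) (use c[THEN carrier_matD(1)] c[THEN carrier_matD(2)] in auto)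
next
  fix a and A :: "complex mat" assume A: "A \<in> carrier_mat n n"
  have c: "f A \<in> carrier_mat p q" "g A \<in> carrier_mat p q" using assms A unfolding linC_def by auto
  show "f (a \<cdot>\<^sub>m A) + g (a \<cdot>\<^sub>m A) = a \<cdot>\<^sub>m (f A + g A)"
    using assms A unfolding linC_def by (intro eq_matI) (use c[THEN carrier_matD(1)] c[THEN carrier_matD(2)] in \<open>auto simp: distrib_left\<close>)
qed

lemma linC_transpose: assumes "linC n f p q" shows "linC n (\<lambda>R. transpose_mat (f R)) q p"
  unfolding linC_def
proof (intro conjI ballI allI)
  fix A :: "complex mat" assume A: "A \<in> carrier_mat n n"
  show "transpose_mat (f A) \<in> carrier_mat q p" using assms A unfolding linC_def by auto
  fix B :: "complex mat" assume B: "B \<in> carrier_mat n n"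
  have c: "f A \<in> carrier_mat p q" "f B \<in> carrier_mat p q"
    using assms A B unfolding linC_def by auto
  show "transpose_mat (f (A + B)) = transpose_mat (f A) + transpose_mat (f B)"
    using assms A B unfolding linC_def by (intro eq_matI) (use c[THEN carrier_matD(1)] c[THEN carrier_matD(2)] in auto)
next
  fix a and A :: "complex mat" assume A: "A \<in> carrier_mat n n"
  have c: "f A \<in> carrier_mat p q" using assms A unfolding linC_def by auto
  show "transpose_mat (f (a \<cdot>\<^sub>m A)) = a \<cdot>\<^sub>m transpose_mat (f A)"
    using assms A unfolding linC_def by (intro eq_matI) (use c[THEN carrier_matD(1)] c[THEN carrier_matD(2)] in \<open>auto\<close>)
qed

lemma linC_had: assumes "linC n f p q" "Y \<in> carrier_mat p q" shows "linC n (\<lambda>R. f R \<odot> Y) p q"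
  unfolding linC_def
proof (intro conjI ballI allI)
  fix A :: "complex mat" assume A: "A \<in> carrier_mat n n"
  show "f A \<odot> Y \<in> carrier_mat p q" using assms A unfolding linC_def by auto
  fix B :: "complex mat" assume B: "B \<in> carrier_mat n n"
  have c: "f A \<in> carrier_mat p q" "f B \<in> carrier_mat p q"
    using assms A B unfolding linC_def by auto
  show "f (A + B) \<odot> Y = f A \<odot> Y + f B \<odot> Y"
    using assms A B unfolding linC_def by (intro eq_matI) (use c[THEN carrier_matD(1)] c[THEN carrier_matD(2)] in \<open>auto simp: distrib_right\<close>)
next
  fix a and A :: "complex mat" assume A: "A \<in> carrier_mat n n"
  have c: "f A \<in> carrier_mat p q" using assms A unfolding linC_def by auto
  show "f (a \<cdot>\<^sub>m A) \<odot> Y = a \<cdot>\<^sub>m (f A \<odot> Y)"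
    using assms A unfolding linC_def by (intro eq_matI) (use c[THEN carrier_matD(1)] c[THEN carrier_matD(2)] in \<open>auto\<close>)
qed

lemma linR_Re: assumes "linC n f p q" shows "linR n (\<lambda>R. Re_mat (f R)) p q"
  unfolding linR_def
proof (intro conjI ballI allI)
  fix A :: "complex mat" assume A: "A \<in> carrier_mat n n"
  show "Re_mat (f A) \<in> carrier_mat p q" using assms A unfolding linC_def by auto
  fix B :: "complex mat" assume B: "B \<in> carrier_mat n n"
  have c: "f A \<in> carrier_mat p q" "f B \<in> carrier_mat p q"
    using assms A B unfolding linC_def by auto
  show "Re_mat (f (A + B)) = Re_mat (f A) + Re_mat (f B)"
    using assms A B unfolding linC_def by (intro eq_matI) (use c[THEN carrier_matD(1)] c[THEN carrier_matD(2)] in auto)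
next
  fix a and A :: "complex mat" assume A: "A \<in> carrier_mat n n"
  have c: "f A \<in> carrier_mat p q" using assms A unfolding linC_def by auto
  show "Re_mat (f (complex_of_real a \<cdot>\<^sub>m A)) = a \<cdot>\<^sub>m Re_mat (f A)"
    using assms A unfolding linC_def by (intro eq_matI) (use c[THEN carrier_matD(1)] c[THEN carrier_matD(2)] in \<open>auto\<close>)
qed

lemma linR_Im: assumes "linC n f p q" shows "linR n (\<lambda>R. Im_mat (f R)) p q"
  unfolding linR_def
proof (intro conjI ballI allI)
  fix A :: "complex mat" assume A: "A \<in> carrier_mat n n"
  show "Im_mat (f A) \<in> carrier_mat p q" using assms A unfolding linC_def by auto
  fix B :: "complex mat" assume B: "B \<in> carrier_mat n n"
  have c: "f A \<in> carrier_mat p q" "f B \<in> carrier_mat p q"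
    using assms A B unfolding linC_def by auto
  show "Im_mat (f (A + B)) = Im_mat (f A) + Im_mat (f B)"
    using assms A B unfolding linC_def by (intro eq_matI) (use c[THEN carrier_matD(1)] c[THEN carrier_matD(2)] in auto)
next
  fix a and A :: "complex mat" assume A: "A \<in> carrier_mat n n"
  have c: "f A \<in> carrier_mat p q" using assms A unfolding linC_def by auto
  show "Im_mat (f (complex_of_real a \<cdot>\<^sub>m A)) = a \<cdot>\<^sub>m Im_mat (f A)"
    using assms A unfolding linC_def by (intro eq_matI) (use c[THEN carrier_matD(1)] c[THEN carrier_matD(2)] in \<open>auto\<close>)
qed

lemma linR_transpose: assumes "linR n f p q" shows "linR n (\<lambda>R. transpose_mat (f R)) q p"
  unfolding linR_def
proof (intro conjI ballI allI)
  fix A :: "complex mat" assume A: "A \<in> carrier_mat n n"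
  show "transpose_mat (f A) \<in> carrier_mat q p" using assms A unfolding linR_def by auto
  fix B :: "complex mat" assume B: "B \<in> carrier_mat n n"
  have c: "f A \<in> carrier_mat p q" "f B \<in> carrier_mat p q"
    using assms A B unfolding linR_def by auto
  show "transpose_mat (f (A + B)) = transpose_mat (f A) + transpose_mat (f B)"
    using assms A B unfolding linR_def by (intro eq_matI) (use c[THEN carrier_matD(1)] c[THEN carrier_matD(2)] in auto)
next
  fix a :: real and A :: "complex mat" assume A: "A \<in> carrier_mat n n"
  have c: "f A \<in> carrier_mat p q" using assms A unfolding linR_def by auto
  show "transpose_mat (f (complex_of_real a \<cdot>\<^sub>m A)) = a \<cdot>\<^sub>m transpose_mat (f A)"
    using assms A unfolding linR_def by (intro eq_matI) (use c[THEN carrier_matD(1)] c[THEN carrier_matD(2)] in \<open>auto\<close>)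
qed

lemma linR_neg: assumes "linR n f p q" shows "linR n (\<lambda>R. - f R) p q"
  unfolding linR_def
proof (intro conjI ballI allI)
  fix A :: "complex mat" assume A: "A \<in> carrier_mat n n"
  show "- f A \<in> carrier_mat p q" using assms A unfolding linR_def by auto
  fix B :: "complex mat" assume B: "B \<in> carrier_mat n n"
  have c: "f A \<in> carrier_mat p q" "f B \<in> carrier_mat p q"
    using assms A B unfolding linR_def by auto
  show "- f (A + B) = - f A + - f B"
    using assms A B unfolding linR_def by (intro eq_matI) (use c[THEN carrier_matD(1)] c[THEN carrier_matD(2)] in auto)
next
  fix a and A :: "complex mat" assume A: "A \<in> carrier_mat n n"
  have c: "f A \<in> carrier_mat p q" using assms A unfolding linR_def by auto
  show "- f (complex_of_real a \<cdot>\<^sub>m A) = a \<cdot>\<^sub>m - f A"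
    using assms A unfolding linR_def by (intro eq_matI) (use c[THEN carrier_matD(1)] c[THEN carrier_matD(2)] in \<open>auto\<close>)
qed

lemma less4: "(p::nat) < 4 \<longleftrightarrow> p = 0 \<or> p = 1 \<or> p = 2 \<or> p = 3" by arith

lemma linR_block4: assumes "\<And>p q. p < 4 \<Longrightarrow> q < 4 \<Longrightarrow> linR n (\<lambda>R. bl R ! p ! q) M M" and M: "0 < M"
  shows "linR n (\<lambda>R. block4 M (bl R)) (4*M) (4*M)"
  unfolding linR_def
proof (intro conjI ballI allI)
  fix A :: "complex mat" assume A: "A \<in> carrier_mat n n"
  show "block4 M (bl A) \<in> carrier_mat (4*M) (4*M)" by auto
  fix B :: "complex mat" assume B: "B \<in> carrier_mat n n"
  show "block4 M (bl (A + B)) = block4 M (bl A) + block4 M (bl B)"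
  proof (rule eq_matI)
    fix i j assume "i < dim_row (block4 M (bl A) + block4 M (bl B))" "j < dim_col (block4 M (bl A) + block4 M (bl B))"
    then have ij: "i < 4*M" "j < 4*M" by auto
    then have pq: "i div M < 4" "j div M < 4" "i mod M < M" "j mod M < M" using M
      by (auto simp: less_mult_imp_div_less)
    note L = assms(1)[OF pq(1,2), unfolded linR_def]
    have c: "bl A ! (i div M) ! (j div M) \<in> carrier_mat M M" "bl B ! (i div M) ! (j div M) \<in> carrier_mat M M"
      using L A B by auto
    show "block4 M (bl (A + B)) $$ (i, j) = (block4 M (bl A) + block4 M (bl B)) $$ (i, j)"
    proof -
      have d: "dim_row (bl B ! (i div M) ! (j div M)) = M" "dim_col (bl B ! (i div M) ! (j div M)) = M"
        using c(2) by auto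
      have "block4 M (bl (A + B)) $$ (i, j) = (bl A ! (i div M) ! (j div M) + bl B ! (i div M) ! (j div M)) $$ (i mod M, j mod M)"
        using ij L A B by (simp add: block4_idx)
      also have "\<dots> = bl A ! (i div M) ! (j div M) $$ (i mod M, j mod M) + bl B ! (i div M) ! (j div M) $$ (i mod M, j mod M)"
        by (rule index_add_mat(1)) (use d pq in auto)
      also have "\<dots> = (block4 M (bl A) + block4 M (bl B)) $$ (i, j)"
        using ij by (simp add: block4_idx)
      finally show ?thesis .
    qed
  qed auto
next
  fix a and A :: "complex mat" assume A: "A \<in> carrier_mat n n"
  show "block4 M (bl (complex_of_real a \<cdot>\<^sub>m A)) = a \<cdot>\<^sub>m block4 M (bl A)"
  proof (rule eq_matI)
    fix i j assume "i < dim_row (a \<cdot>\<^sub>m block4 M (bl A))" "j < dim_col (a \<cdot>\<^sub>m block4 M (bl A))"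
    then have ij: "i < 4*M" "j < 4*M" by auto
    then have pq: "i div M < 4" "j div M < 4" "i mod M < M" "j mod M < M" using M
      by (auto simp: less_mult_imp_div_less)
    note L = assms(1)[OF pq(1,2), unfolded linR_def]
    have c: "bl A ! (i div M) ! (j div M) \<in> carrier_mat M M"
      using L A by auto
    show "block4 M (bl (complex_of_real a \<cdot>\<^sub>m A)) $$ (i, j) = (a \<cdot>\<^sub>m block4 M (bl A)) $$ (i, j)"
    proof -
      have d: "dim_row (bl A ! (i div M) ! (j div M)) = M" "dim_col (bl A ! (i div M) ! (j div M)) = M"
        using c by auto
      have "block4 M (bl (complex_of_real a \<cdot>\<^sub>m A)) $$ (i, j) = (a \<cdot>\<^sub>m bl A ! (i div M) ! (j div M)) $$ (i mod M, j mod M)"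
        using ij L A by (simp add: block4_idx)
      also have "\<dots> = a * bl A ! (i div M) ! (j div M) $$ (i mod M, j mod M)"
        by (rule index_smult_mat(1)) (use d pq in auto)
      also have "\<dots> = (a \<cdot>\<^sub>m block4 M (bl A)) $$ (i, j)"
        using ij by (simp add: block4_idx)
      finally show ?thesis .
    qed
  qed auto
qed

lemma linC_term5: assumes "X1 \<in> carrier_mat p m2" "X2 \<in> carrier_mat m2 n" "Y1 \<in> carrier_mat n m3"
    "Y2 \<in> carrier_mat m3 q" "Z \<in> carrier_mat q p"
  shows "linC n (\<lambda>R. transpose_mat (X1 * X2 * R * Y1 * Y2) \<odot> Z) q p"
  using linC_had[OF linC_transpose[OF linC_right[OF linC_right[OF linC_left[OF mult_carrier_mat[OF assms(1,2)]] assms(3)] assms(4)]] assms(5)] .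

lemma linC_term4: assumes "X2 \<in> carrier_mat p n" "Y1 \<in> carrier_mat n m3"
    "Y2 \<in> carrier_mat m3 q" "Z \<in> carrier_mat q p"
  shows "linC n (\<lambda>R. transpose_mat (X2 * R * Y1 * Y2) \<odot> Z) q p"
  using linC_had[OF linC_transpose[OF linC_right[OF linC_right[OF linC_left[OF assms(1)] assms(2)] assms(3)]] assms(4)] .

lemma linC_term3: assumes "X2 \<in> carrier_mat p n" "Y1 \<in> carrier_mat n q" "Z \<in> carrier_mat q p"
  shows "linC n (\<lambda>R. transpose_mat (X2 * R * Y1) \<odot> Z) q p"
  using linC_had[OF linC_transpose[OF linC_right[OF linC_left[OF assms(1)] assms(2)]] assms(3)] .

lemma linC_F11g: assumes "sdims Nt Nr M S" "Ad \<in> carrier_mat Nt M" "Bd \<in> carrier_mat Nr M"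
  shows "linC Nt (\<lambda>R. F11g S R Ad Bd) M M"
proof -
  have c: "sA S \<in> carrier_mat Nt M" "sB S \<in> carrier_mat Nr M" "sU S \<in> carrier_mat M M"
    using assms(1) by (auto simp: sdims_def)
  show ?thesis unfolding F11g_def Let_def
    by (intro linC_add linC_term5) (use c assms(2,3) in auto)
qed

lemma linC_F12m: assumes "sdims Nt Nr M S"
  shows "linC Nt (\<lambda>R. F12m S R) M M"
proof -
  have c: "sA S \<in> carrier_mat Nt M" "sB S \<in> carrier_mat Nr M" "sU S \<in> carrier_mat M M"
    "sAt S \<in> carrier_mat Nt M" "sBt S \<in> carrier_mat Nr M" "sAp S \<in> carrier_mat Nt M" "sBp S \<in> carrier_mat Nr M"
    using assms(1) by (auto simp: sdims_def)
  show ?thesis unfolding F12m_def Let_def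
    by (intro linC_add linC_term5) (use c in auto)
qed

lemma linC_F13g: assumes "sdims Nt Nr M S" "Ad \<in> carrier_mat Nt M" "Bd \<in> carrier_mat Nr M"
  shows "linC Nt (\<lambda>R. F13g S R Ad Bd) M M"
proof -
  have c: "sA S \<in> carrier_mat Nt M" "sB S \<in> carrier_mat Nr M" "sU S \<in> carrier_mat M M"
    using assms(1) by (auto simp: sdims_def)
  show ?thesis unfolding F13g_def Let_def
    by (intro linC_add linC_term4) (use c assms(2,3) in auto)
qed

lemma linC_F33m: assumes "sdims Nt Nr M S"
  shows "linC Nt (\<lambda>R. F33m S R) M M"
proof -
  have c: "sA S \<in> carrier_mat Nt M" "sB S \<in> carrier_mat Nr M"
    using assms(1) by (auto simp: sdims_def)
  show ?thesis unfolding F33m_def Let_def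
    by (intro linC_term3) (use c in auto)
qed

lemma linR_FLc: assumes "sdims Nt Nr M S" "0 < M"
  shows "linR Nt (FLc M S) (4*M) (4*M)"
proof -
  have d: "sAt S \<in> carrier_mat Nt M" "sBt S \<in> carrier_mat Nr M" "sAp S \<in> carrier_mat Nt M" "sBp S \<in> carrier_mat Nr M"
    using assms(1) unfolding sdims_def by auto
  note L = linC_F11g[OF assms(1) d(1,2)] linC_F11g[OF assms(1) d(3,4)] linC_F12m[OF assms(1)]
    linC_F13g[OF assms(1) d(1,2)] linC_F13g[OF assms(1) d(3,4)] linC_F33m[OF assms(1)]
  have "linR Nt (\<lambda>R. block4 M (
      [[Re_mat (F11g S R (sAt S) (sBt S)), Re_mat (F12m S R), Re_mat (F13g S R (sAt S) (sBt S)), - Im_mat (F13g S R (sAt S) (sBt S))],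
       [transpose_mat (Re_mat (F12m S R)), Re_mat (F11g S R (sAp S) (sBp S)), Re_mat (F13g S R (sAp S) (sBp S)), - Im_mat (F13g S R (sAp S) (sBp S))],
       [transpose_mat (Re_mat (F13g S R (sAt S) (sBt S))), transpose_mat (Re_mat (F13g S R (sAp S) (sBp S))), Re_mat (F33m S R), - Im_mat (F33m S R)],
       [- transpose_mat (Im_mat (F13g S R (sAt S) (sBt S))), - transpose_mat (Im_mat (F13g S R (sAp S) (sBp S))), - transpose_mat (Im_mat (F33m S R)), Re_mat (F33m S R)]]))
     (4*M) (4*M)"
  proof (rule linR_block4[OF _ assms(2)])
    fix p q :: nat assume "p < 4" "q < 4"
    then show "linR Nt (\<lambda>R. [[Re_mat (F11g S R (sAt S) (sBt S)), Re_mat (F12m S R), Re_mat (F13g S R (sAt S) (sBt S)), - Im_mat (F13g S R (sAt S) (sBt S))],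
       [transpose_mat (Re_mat (F12m S R)), Re_mat (F11g S R (sAp S) (sBp S)), Re_mat (F13g S R (sAp S) (sBp S)), - Im_mat (F13g S R (sAp S) (sBp S))],
       [transpose_mat (Re_mat (F13g S R (sAt S) (sBt S))), transpose_mat (Re_mat (F13g S R (sAp S) (sBp S))), Re_mat (F33m S R), - Im_mat (F33m S R)],
       [- transpose_mat (Im_mat (F13g S R (sAt S) (sBt S))), - transpose_mat (Im_mat (F13g S R (sAp S) (sBp S))), - transpose_mat (Im_mat (F33m S R)), Re_mat (F33m S R)]] ! p ! q) M M"
      unfolding less4 using L
      by (elim disjE) (simp_all add: linR_neg linR_transpose linR_Re linR_Im)
  qed
  then show ?thesis unfolding FLc_def Let_def by (simp add: fun_eq_iff)
qed

definition pR :: "nat \<Rightarrow> real mat \<Rightarrow> real mat \<Rightarrow> real" where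
  "pR M P Z = (\<Sum>r<M. \<Sum>c<M. P$$(r,c) * Z$$(r,c))"
definition pC :: "nat \<Rightarrow> complex mat \<Rightarrow> complex mat \<Rightarrow> complex" where
  "pC M P Z = (\<Sum>r<M. \<Sum>c<M. P$$(r,c) * Z$$(r,c))"

lemma sum4: "(\<Sum>q<(4::nat). f q) = f 0 + f 1 + f 2 + f 3"
proof -
  have "{..<4::nat} = {0,1,2,3}" by auto
  then show ?thesis by (simp add: add.assoc)
qed

lemma trace_block4:
  fixes Phi :: "real mat"
  assumes Pc: "Phi \<in> carrier_mat (4*M) (4*M)" and Ps: "transpose_mat Phi = Phi" and M: "0 < M"
  shows "mtrace (Phi * block4 M bl) = (\<Sum>q<4. \<Sum>p<4. pR M (blk M Phi (q+1) (p+1)) (bl!q!p))"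
proof -
  have sym: "Phi $$ (i,j) = Phi $$ (j,i)" if "i < 4*M" "j < 4*M" for i j
  proof -
    have "Phi $$ (i,j) = transpose_mat Phi $$ (i,j)" using Ps by simp
    also have "\<dots> = Phi $$ (j,i)" using that Pc by auto
    finally show ?thesis .
  qed
  have "mtrace (Phi * block4 M bl) = (\<Sum>i<4*M. \<Sum>j<4*M. Phi $$ (i,j) * block4 M bl $$ (j,i))"
    using Pc by (simp add: mtrace_def mult_idx del: index_mult_mat(1))
  also have "\<dots> = (\<Sum>i<4*M. \<Sum>j<4*M. Phi $$ (j,i) * block4 M bl $$ (j,i))"
    by (intro sum.cong refl) (simp add: sym)
  also have "\<dots> = (\<Sum>j<4*M. \<Sum>i<4*M. Phi $$ (j,i) * block4 M bl $$ (j,i))"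
    by (rule sum.swap)
  also have "\<dots> = (\<Sum>q<4. \<Sum>c<M. \<Sum>p<4. \<Sum>r<M. Phi $$ (c + q*M, r + p*M) * block4 M bl $$ (c + q*M, r + p*M))"
    by (simp add: sum_mult_product[of _ 4 M])
  also have "\<dots> = (\<Sum>q<4. \<Sum>c<M. \<Sum>p<4. \<Sum>r<M. Phi $$ (q*M + c, p*M + r) * (bl!q!p) $$ (c, r))"
  proof (intro sum.cong refl)
    fix q c p r assume "q \<in> {..<4::nat}" "c \<in> {..<M}" "p \<in> {..<4::nat}" "r \<in> {..<M}"
    then have "q < 4" "c < M" "p < 4" "r < M" by auto
    moreover have "c + q*M < 4*M" "r + p*M < 4*M"
    proof -
      have "c + q*M < M + q*M" using \<open>c < M\<close> by simp
      also have "\<dots> = (q+1)*M" by simp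
      also have "\<dots> \<le> 4*M" using \<open>q<4\<close> by (intro mult_right_mono) auto
      finally show "c + q*M < 4*M" .
      have "r + p*M < M + p*M" using \<open>r < M\<close> by simp
      also have "\<dots> = (p+1)*M" by simp
      also have "\<dots> \<le> 4*M" using \<open>p<4\<close> by (intro mult_right_mono) auto
      finally show "r + p*M < 4*M" .
    qed
    ultimately show "Phi $$ (c + q*M, r + p*M) * block4 M bl $$ (c + q*M, r + p*M) = Phi $$ (q*M + c, p*M + r) * (bl!q!p) $$ (c, r)"
      using M by (simp add: block4_idx add.commute)
  qed
  also have "\<dots> = (\<Sum>q<4. \<Sum>p<4. \<Sum>c<M. \<Sum>r<M. Phi $$ (q*M + c, p*M + r) * (bl!q!p) $$ (c, r))"
    by (rule sum.cong[OF refl]) (rule sum.swap)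
  also have "\<dots> = (\<Sum>q<4. \<Sum>p<4. pR M (blk M Phi (q+1) (p+1)) (bl!q!p))"
    by (intro sum.cong refl) (simp add: pR_def)
  finally show ?thesis .
qed

lemma pC_had: assumes "P \<in> carrier_mat M M" "X \<in> carrier_mat M M" "Y \<in> carrier_mat M M"
  shows "pC M P (transpose_mat X \<odot> Y) = mtrace ((P \<odot> Y) * X)"
  using assms by (simp add: pC_def mtrace_def mult_idx ac_simps del: index_mult_mat(1))

lemma assoc_sym: "A \<in> carrier_mat n1 n2 \<Longrightarrow> B \<in> carrier_mat n2 n3 \<Longrightarrow> C \<in> carrier_mat n3 n4 \<Longrightarrow> A * (B * C) = A * B * C"
  by (simp add: assoc_mult_mat)

lemma cyc5: assumes P: "P \<in> carrier_mat m m" and X1: "X1 \<in> carrier_mat m a" and X2: "X2 \<in> carrier_mat a n"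
  and R: "R \<in> carrier_mat n n" and Y1: "Y1 \<in> carrier_mat n b" and Y2: "Y2 \<in> carrier_mat b m"
  shows "mtrace (P * (X1 * X2 * R * Y1 * Y2)) = mtrace (Y1 * Y2 * P * X1 * X2 * R)"
proof -
  have A: "X1 * X2 * R \<in> carrier_mat m n" using assms by auto
  have B: "Y1 * Y2 \<in> carrier_mat n m" using assms by auto
  have PX: "P * X1 \<in> carrier_mat m a" using assms by auto
  have PXX: "P * X1 * X2 \<in> carrier_mat m n" using assms by auto
  have e1: "P * (X1 * X2 * R * Y1 * Y2) = (P * (X1 * X2 * R)) * (Y1 * Y2)"
    unfolding assoc_mult_mat[OF A Y1 Y2] assoc_sym[OF P A B] ..
  have e2: "Y1 * Y2 * P * X1 * X2 * R = (Y1 * Y2) * (P * X1 * X2 * R)"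
    unfolding assoc_sym[OF B PXX R] assoc_sym[OF B PX X2] assoc_sym[OF B P X1] ..
  have e3: "P * (X1 * X2 * R) = P * X1 * X2 * R"
    unfolding assoc_sym[OF P mult_carrier_mat[OF X1 X2] R] assoc_sym[OF P X1 X2] ..
  show ?thesis unfolding e1 e2 e3 by (rule mtrace_comm) (use assms in auto)
qed

lemma cyc4: assumes P: "P \<in> carrier_mat m m" and X2: "X2 \<in> carrier_mat m n" and R: "R \<in> carrier_mat n n"
  and Y1: "Y1 \<in> carrier_mat n b" and Y2: "Y2 \<in> carrier_mat b m"
  shows "mtrace (P * (X2 * R * Y1 * Y2)) = mtrace (Y1 * Y2 * P * X2 * R)"
proof -
  have A: "X2 * R \<in> carrier_mat m n" using assms by auto
  have B: "Y1 * Y2 \<in> carrier_mat n m" using assms by auto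
  have PX: "P * X2 \<in> carrier_mat m n" using assms by auto
  have e1: "P * (X2 * R * Y1 * Y2) = (P * (X2 * R)) * (Y1 * Y2)"
    unfolding assoc_mult_mat[OF A Y1 Y2] assoc_sym[OF P A B] ..
  have e2: "Y1 * Y2 * P * X2 * R = (Y1 * Y2) * (P * X2 * R)"
    unfolding assoc_sym[OF B PX R] assoc_sym[OF B P X2] ..
  have e3: "P * (X2 * R) = P * X2 * R"
    unfolding assoc_sym[OF P X2 R] ..
  show ?thesis unfolding e1 e2 e3 by (rule mtrace_comm) (use assms in auto)
qed

lemma cyc3: assumes P: "P \<in> carrier_mat m m" and X2: "X2 \<in> carrier_mat m n" and R: "R \<in> carrier_mat n n"
  and Y1: "Y1 \<in> carrier_mat n m"
  shows "mtrace (P * (X2 * R * Y1)) = mtrace (Y1 * P * X2 * R)"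
proof -
  have A: "X2 * R \<in> carrier_mat m n" using assms by auto
  have PX: "P * X2 \<in> carrier_mat m n" using assms by auto
  have e1: "P * (X2 * R * Y1) = (P * (X2 * R)) * Y1"
    unfolding assoc_sym[OF P A Y1] ..
  have e2: "Y1 * P * X2 * R = Y1 * (P * X2 * R)"
    unfolding assoc_sym[OF Y1 PX R] assoc_sym[OF Y1 P X2] ..
  have e3: "P * (X2 * R) = P * X2 * R"
    unfolding assoc_sym[OF P X2 R] ..
  show ?thesis unfolding e1 e2 e3 by (rule mtrace_comm) (use assms in auto)
qed

lemma sym_entry: assumes "transpose_mat Phi = Phi" "Phi \<in> carrier_mat n n" "i < n" "j < n"
  shows "Phi $$ (i,j) = Phi $$ (j,i)"
proof -
  have "transpose_mat Phi $$ (i,j) = Phi $$ (j,i)" using assms(2-4) by auto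
  then show ?thesis using assms(1) by simp
qed

lemma pC_add2: "Z1 \<in> carrier_mat M M \<Longrightarrow> Z2 \<in> carrier_mat M M \<Longrightarrow> pC M P (Z1 + Z2) = pC M P Z1 + pC M P Z2"
  by (simp add: pC_def distrib_left sum.distrib)

lemma pC_add1: "P1 \<in> carrier_mat M M \<Longrightarrow> P2 \<in> carrier_mat M M \<Longrightarrow> pC M (P1 + P2) Z = pC M P1 Z + pC M P2 Z"
  by (simp add: pC_def distrib_right sum.distrib)

lemma pC_smult1: "P \<in> carrier_mat M M \<Longrightarrow> pC M (a \<cdot>\<^sub>m P) Z = a * pC M P Z"
  by (simp add: pC_def sum_distrib_left mult.assoc)

lemma mtrace_add_mult: "A \<in> carrier_mat n n \<Longrightarrow> B \<in> carrier_mat n n \<Longrightarrow> R \<in> carrier_mat n n \<Longrightarrow>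
   mtrace ((A + B) * R) = mtrace (A * R) + mtrace (B * R)"
  by (simp add: add_mult_distrib_mat[of _ n n] mtrace_add[of _ n])

lemma mtrace_smult_mult: "A \<in> carrier_mat n n \<Longrightarrow> R \<in> carrier_mat n n \<Longrightarrow>
   mtrace ((a \<cdot>\<^sub>m A) * R) = a * mtrace (A * R)"
  by (simp add: mult_smult_assoc_mat[of _ n n] mtrace_smult[of _ n])

lemma pR_transpose: "P \<in> carrier_mat M M \<Longrightarrow> Z \<in> carrier_mat M M \<Longrightarrow> pR M P (transpose_mat Z) = pR M (transpose_mat P) Z"
  unfolding pR_def by (subst sum.swap) (simp add: mult.commute)

lemma pR_neg: "Z \<in> carrier_mat M M \<Longrightarrow> pR M P (- Z) = - pR M P Z"
  by (simp add: pR_def sum_negf)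

lemma pR_Re: "P \<in> carrier_mat M M \<Longrightarrow> Z \<in> carrier_mat M M \<Longrightarrow> pR M P (Re_mat Z) = Re (pC M (cmat P) Z)"
  by (simp add: pR_def pC_def Re_sum)

lemma pR_Im: "P \<in> carrier_mat M M \<Longrightarrow> Z \<in> carrier_mat M M \<Longrightarrow> pR M P (Im_mat Z) = Im (pC M (cmat P) Z)"
  by (simp add: pR_def pC_def Im_sum)

lemma blk_sym: assumes "Phi \<in> carrier_mat (4*M) (4*M)" "transpose_mat Phi = Phi" "1 \<le> p" "p \<le> 4" "1 \<le> q" "q \<le> 4"
  shows "blk M Phi q p = transpose_mat (blk M Phi p q)"
proof (rule eq_matI)
  fix r c assume rc: "r < dim_row (transpose_mat (blk M Phi p q))" "c < dim_col (transpose_mat (blk M Phi p q))"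
  then have rc': "r < M" "c < M" by auto
  have b1: "(q - 1) * M + r < 4 * M"
  proof -
    have "(q - 1) * M + r < (q - 1) * M + M" using rc' by simp
    also have "\<dots> = q * M" using assms by (cases q) auto
    also have "\<dots> \<le> 4 * M" using assms by (intro mult_right_mono) auto
    finally show ?thesis .
  qed
  have b2: "(p - 1) * M + c < 4 * M"
  proof -
    have "(p - 1) * M + c < (p - 1) * M + M" using rc' by simp
    also have "\<dots> = p * M" using assms by (cases p) auto
    also have "\<dots> \<le> 4 * M" using assms by (intro mult_right_mono) auto
    finally show ?thesis .
  qed
  have "Phi $$ ((q - 1) * M + r, (p - 1) * M + c) = Phi $$ ((p - 1) * M + c, (q - 1) * M + r)"
    using sym_entry[OF assms(2,1) b1 b2] .
  then show "blk M Phi q p $$ (r, c) = transpose_mat (blk M Phi p q) $$ (r, c)"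
    using rc' by simp
qed auto

lemma H11: assumes S: "sdims Nt Nr M S" and Ad: "Ad \<in> carrier_mat Nt M" and Bd: "Bd \<in> carrier_mat Nr M"
  and P: "P \<in> carrier_mat M M" and R: "R \<in> carrier_mat Nt Nt"
  shows "pC M P (F11g S R Ad Bd) = mtrace (Q11g S P Ad Bd * R)"
proof -
  have c: "sA S \<in> carrier_mat Nt M" "sB S \<in> carrier_mat Nr M" "sU S \<in> carrier_mat M M"
    using S by (auto simp: sdims_def)
  have cs: "sU S * cH (sA S) * R * sA S * cH (sU S) \<in> carrier_mat M M"
     "sU S * cH (sA S) * R * Ad * cH (sU S) \<in> carrier_mat M M"
     "sU S * cH Ad * R * sA S * cH (sU S) \<in> carrier_mat M M"
     "sU S * cH Ad * R * Ad * cH (sU S) \<in> carrier_mat M M"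
     "cH Bd * Bd \<in> carrier_mat M M" "cH (sB S) * Bd \<in> carrier_mat M M"
     "cH Bd * sB S \<in> carrier_mat M M" "cH (sB S) * sB S \<in> carrier_mat M M"
    using c Ad Bd R by auto
  have qs: "sA S * cH (sU S) * (P \<odot> (cH Bd * Bd)) * sU S * cH (sA S) \<in> carrier_mat Nt Nt"
    "Ad * cH (sU S) * (P \<odot> (cH (sB S) * Bd)) * sU S * cH (sA S) \<in> carrier_mat Nt Nt"
    "sA S * cH (sU S) * (P \<odot> (cH Bd * sB S)) * sU S * cH Ad \<in> carrier_mat Nt Nt"
    "Ad * cH (sU S) * (P \<odot> (cH (sB S) * sB S)) * sU S * cH Ad \<in> carrier_mat Nt Nt"
    using c Ad Bd P by auto
  show ?thesis unfolding F11g_def Q11g_def Let_def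
    using c cs qs Ad Bd R P
    by (simp add: pC_add2 pC_had cyc5[of _ M _ M _ Nt] mtrace_add_mult[of _ Nt] del: assoc_mult_mat)
qed

lemma H12: assumes S: "sdims Nt Nr M S"
  and P: "P \<in> carrier_mat M M" and R: "R \<in> carrier_mat Nt Nt"
  shows "mtrace (Q12m S P * R) = 2 * pC M P (F12m S R)"
proof -
  have c: "sA S \<in> carrier_mat Nt M" "sB S \<in> carrier_mat Nr M" "sU S \<in> carrier_mat M M"
    "sAt S \<in> carrier_mat Nt M" "sBt S \<in> carrier_mat Nr M" "sAp S \<in> carrier_mat Nt M" "sBp S \<in> carrier_mat Nr M"
    using S by (auto simp: sdims_def)
  have cs: "sU S * cH (sA S) * R * sA S * cH (sU S) \<in> carrier_mat M M"
     "sU S * cH (sA S) * R * sAt S * cH (sU S) \<in> carrier_mat M M"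
     "sU S * cH (sAp S) * R * sA S * cH (sU S) \<in> carrier_mat M M"
     "sU S * cH (sAp S) * R * sAt S * cH (sU S) \<in> carrier_mat M M"
     "cH (sBt S) * sBp S \<in> carrier_mat M M" "cH (sB S) * sBp S \<in> carrier_mat M M"
     "cH (sBt S) * sB S \<in> carrier_mat M M" "cH (sB S) * sB S \<in> carrier_mat M M"
    using c R by auto
  have qs: "sA S * cH (sU S) * (P \<odot> (cH (sBt S) * sBp S)) * sU S * cH (sA S) \<in> carrier_mat Nt Nt"
    "sAt S * cH (sU S) * (P \<odot> (cH (sB S) * sBp S)) * sU S * cH (sA S) \<in> carrier_mat Nt Nt"
    "sA S * cH (sU S) * (P \<odot> (cH (sBt S) * sB S)) * sU S * cH (sAp S) \<in> carrier_mat Nt Nt"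
    "sAt S * cH (sU S) * (P \<odot> (cH (sB S) * sB S)) * sU S * cH (sAp S) \<in> carrier_mat Nt Nt"
    using c P by auto
  have sm: "mtrace ((2 \<cdot>\<^sub>m X) * R) = 2 * mtrace (X * R)" if "X \<in> carrier_mat Nt Nt" for X
    using mtrace_smult_mult[OF that R] .
  show ?thesis unfolding F12m_def Q12m_def Let_def
    using c cs qs R P
    by (simp add: sm pC_add2 pC_had cyc5[of _ M _ M _ Nt] mtrace_add_mult[of _ Nt] del: assoc_mult_mat)
qed

lemma H13: assumes S: "sdims Nt Nr M S" and Ad: "Ad \<in> carrier_mat Nt M" and Bd: "Bd \<in> carrier_mat Nr M"
  and P3: "P3 \<in> carrier_mat M M" and P4: "P4 \<in> carrier_mat M M" and R: "R \<in> carrier_mat Nt Nt"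
  shows "mtrace (Q13g S P3 P4 Ad Bd * R) = pC M (2 \<cdot>\<^sub>m P3 + (2 * \<i>) \<cdot>\<^sub>m P4) (F13g S R Ad Bd)"
proof -
  define P where "P = 2 \<cdot>\<^sub>m P3 + (2 * \<i>) \<cdot>\<^sub>m P4"
  have P: "P \<in> carrier_mat M M" using P3 P4 by (simp add: P_def)
  have c: "sA S \<in> carrier_mat Nt M" "sB S \<in> carrier_mat Nr M" "sU S \<in> carrier_mat M M"
    using S by (auto simp: sdims_def)
  have cs: "cH (sA S) * R * sA S * cH (sU S) \<in> carrier_mat M M"
     "cH (sA S) * R * Ad * cH (sU S) \<in> carrier_mat M M"
     "cH Bd * sB S \<in> carrier_mat M M" "cH (sB S) * sB S \<in> carrier_mat M M"
    using c Ad Bd R by auto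
  have qs: "sA S * cH (sU S) * (P \<odot> (cH Bd * sB S)) * cH (sA S) \<in> carrier_mat Nt Nt"
    "Ad * cH (sU S) * (P \<odot> (cH (sB S) * sB S)) * cH (sA S) \<in> carrier_mat Nt Nt"
    using c P Ad Bd by auto
  show ?thesis unfolding F13g_def Q13g_def Let_def P_def[symmetric]
    using c cs qs Ad Bd R P
    by (simp add: pC_add2 pC_had cyc4[of _ M _ Nt] mtrace_add_mult[of _ Nt] del: assoc_mult_mat)
qed

lemma H33: assumes S: "sdims Nt Nr M S"
  and P33: "P33 \<in> carrier_mat M M" and P44: "P44 \<in> carrier_mat M M" and P34: "P34 \<in> carrier_mat M M"
  and R: "R \<in> carrier_mat Nt Nt"
  shows "mtrace (Q33m S P33 P44 P34 * R) = pC M (P33 + P44 + (2 * \<i>) \<cdot>\<^sub>m P34) (F33m S R)"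
proof -
  define P where "P = P33 + P44 + (2 * \<i>) \<cdot>\<^sub>m P34"
  have P: "P \<in> carrier_mat M M" using P33 P44 P34 by (simp add: P_def)
  have c: "sA S \<in> carrier_mat Nt M" "sB S \<in> carrier_mat Nr M"
    using S by (auto simp: sdims_def)
  have cs: "cH (sA S) * R * sA S \<in> carrier_mat M M" "cH (sB S) * sB S \<in> carrier_mat M M"
    using c R by auto
  show ?thesis unfolding F33m_def Q33m_def Let_def P_def[symmetric]
    using c cs R P
    by (simp add: pC_had cyc3[of _ M _ Nt] del: assoc_mult_mat)
qed

definition Qcore :: "nat \<Rightarrow> sensing \<Rightarrow> real mat \<Rightarrow> complex mat" where
  "Qcore M S Phi = (let P = (\<lambda>p q. cmat (blk M Phi p q)) in
      Q11g S (P 1 1) (sAt S) (sBt S) + Q12m S (P 1 2) + Q13g S (P 1 3) (P 1 4) (sAt S) (sBt S)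
     + Q11g S (P 2 2) (sAp S) (sBp S) + Q13g S (P 2 3) (P 2 4) (sAp S) (sBp S)
     + Q33m S (P 3 3) (P 4 4) (P 3 4))"

lemma Qmat_Qcore: "Qmat M L ss2 S W = complex_of_real (2 * real L / ss2) \<cdot>\<^sub>m
   Qcore M S (minv (FIM M L ss2 S W) * minv (FIM M L ss2 S W))"
  by (simp add: Qmat_def Qcore_def Let_def)

lemma blk_carrier[simp]: "blk M Phi p q \<in> carrier_mat M M"
  by (metis blk_dims carrier_matI)

lemma blk_T: assumes "Phi \<in> carrier_mat (4*M) (4*M)" "transpose_mat Phi = Phi" "1 \<le> p" "p \<le> 4" "1 \<le> q" "q \<le> 4"
  shows "transpose_mat (blk M Phi p q) = blk M Phi q p"
  using blk_sym[OF assms] by simp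

lemma Q_carriers: assumes S: "sdims Nt Nr M S" and Ad: "Ad \<in> carrier_mat Nt M" and Bd: "Bd \<in> carrier_mat Nr M"
  and P: "P \<in> carrier_mat M M" "P' \<in> carrier_mat M M" "P'' \<in> carrier_mat M M"
  shows "Q11g S P Ad Bd \<in> carrier_mat Nt Nt" "Q12m S P \<in> carrier_mat Nt Nt"
    "Q13g S P P' Ad Bd \<in> carrier_mat Nt Nt" "Q33m S P P' P'' \<in> carrier_mat Nt Nt"
proof -
  have c: "sA S \<in> carrier_mat Nt M" "sB S \<in> carrier_mat Nr M" "sU S \<in> carrier_mat M M"
    "sAt S \<in> carrier_mat Nt M" "sBt S \<in> carrier_mat Nr M" "sAp S \<in> carrier_mat Nt M" "sBp S \<in> carrier_mat Nr M"
    using S by (auto simp: sdims_def)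
  show "Q11g S P Ad Bd \<in> carrier_mat Nt Nt" unfolding Q11g_def Let_def using c Ad Bd P by auto
  show "Q12m S P \<in> carrier_mat Nt Nt" unfolding Q12m_def Let_def using c P by auto
  show "Q13g S P P' Ad Bd \<in> carrier_mat Nt Nt" unfolding Q13g_def Let_def using c Ad Bd P by auto
  show "Q33m S P P' P'' \<in> carrier_mat Nt Nt" unfolding Q33m_def Let_def using c P by auto
qed

lemma trace_FLc: assumes S: "sdims Nt Nr M S" and M: "0 < M"
  and Pc: "Phi \<in> carrier_mat (4*M) (4*M)" and Ps: "transpose_mat Phi = Phi" and R: "R \<in> carrier_mat Nt Nt"
  shows "mtrace (Phi * FLc M S R) = Re (mtrace (Qcore M S Phi * R))"
proof -
  have d: "sAt S \<in> carrier_mat Nt M" "sBt S \<in> carrier_mat Nr M" "sAp S \<in> carrier_mat Nt M" "sBp S \<in> carrier_mat Nr M"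
    using S unfolding sdims_def by auto
  define C11 where "C11 = F11g S R (sAt S) (sBt S)"
  define C22 where "C22 = F11g S R (sAp S) (sBp S)"
  define C12 where "C12 = F12m S R"
  define C13 where "C13 = F13g S R (sAt S) (sBt S)"
  define C23 where "C23 = F13g S R (sAp S) (sBp S)"
  define C33 where "C33 = F33m S R"
  have Cc: "C11 \<in> carrier_mat M M" "C22 \<in> carrier_mat M M" "C12 \<in> carrier_mat M M"
    "C13 \<in> carrier_mat M M" "C23 \<in> carrier_mat M M" "C33 \<in> carrier_mat M M"
    using linC_F11g[OF S d(1,2)] linC_F11g[OF S d(3,4)] linC_F12m[OF S]
      linC_F13g[OF S d(1,2)] linC_F13g[OF S d(3,4)] linC_F33m[OF S] R
    unfolding linC_def C11_def C22_def C12_def C13_def C23_def C33_def by auto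
  define P where "P p q = blk M Phi p q" for p q
  have Pcar: "\<And>p q. P p q \<in> carrier_mat M M" by (simp add: P_def)
  have PT: "\<And>p q. 1 \<le> p \<Longrightarrow> p \<le> 4 \<Longrightarrow> 1 \<le> q \<Longrightarrow> q \<le> 4 \<Longrightarrow> transpose_mat (P p q) = P q p"
    unfolding P_def by (rule blk_T[OF Pc Ps])
  have "mtrace (Phi * FLc M S R) =
     pR M (P 1 1) (Re_mat C11) + pR M (P 1 2) (Re_mat C12) + pR M (P 1 3) (Re_mat C13) + pR M (P 1 4) (- Im_mat C13)
   + (pR M (P 2 1) (transpose_mat (Re_mat C12)) + pR M (P 2 2) (Re_mat C22) + pR M (P 2 3) (Re_mat C23) + pR M (P 2 4) (- Im_mat C23))
   + (pR M (P 3 1) (transpose_mat (Re_mat C13)) + pR M (P 3 2) (transpose_mat (Re_mat C23)) + pR M (P 3 3) (Re_mat C33) + pR M (P 3 4) (- Im_mat C33))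
   + (pR M (P 4 1) (- transpose_mat (Im_mat C13)) + pR M (P 4 2) (- transpose_mat (Im_mat C23)) + pR M (P 4 3) (- transpose_mat (Im_mat C33)) + pR M (P 4 4) (Re_mat C33))"
  proof -
    have e: "(0::nat)+1 = 1" "(1::nat)+1 = 2" "(2::nat)+1 = 3" "(3::nat)+1 = 4" by simp_all
    show ?thesis
      unfolding FLc_def Let_def trace_block4[OF Pc Ps M] sum4 C11_def C22_def C12_def C13_def C23_def C33_def P_def
      by (simp only: e) simp
  qed
  also have "\<dots> = Re (pC M (cmat (P 1 1)) C11) + 2 * Re (pC M (cmat (P 1 2)) C12) + 2 * Re (pC M (cmat (P 1 3)) C13)
     - 2 * Im (pC M (cmat (P 1 4)) C13) + Re (pC M (cmat (P 2 2)) C22) + 2 * Re (pC M (cmat (P 2 3)) C23)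
     - 2 * Im (pC M (cmat (P 2 4)) C23) + Re (pC M (cmat (P 3 3)) C33) - 2 * Im (pC M (cmat (P 3 4)) C33)
     + Re (pC M (cmat (P 4 4)) C33)"
    using Cc Pcar by (simp add: pR_transpose pR_neg pR_Re pR_Im PT)
  also have "\<dots> = Re (mtrace (Qcore M S Phi * R))"
  proof -
    have cP: "\<And>p q. cmat (P p q) \<in> carrier_mat M M" using Pcar by simp
    note QC = Q_carriers[OF S d(1,2) cP cP cP] Q_carriers[OF S d(3,4) cP cP cP]
    have "mtrace (Qcore M S Phi * R) =
      mtrace (Q11g S (cmat (P 1 1)) (sAt S) (sBt S) * R) + mtrace (Q12m S (cmat (P 1 2)) * R)
     + mtrace (Q13g S (cmat (P 1 3)) (cmat (P 1 4)) (sAt S) (sBt S) * R)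
     + mtrace (Q11g S (cmat (P 2 2)) (sAp S) (sBp S) * R)
     + mtrace (Q13g S (cmat (P 2 3)) (cmat (P 2 4)) (sAp S) (sBp S) * R)
     + mtrace (Q33m S (cmat (P 3 3)) (cmat (P 4 4)) (cmat (P 3 4)) * R)"
      unfolding Qcore_def Let_def P_def[symmetric] using QC R
      by (simp add: mtrace_add_mult[of _ Nt] del: assoc_mult_mat)
    also have "\<dots> = pC M (cmat (P 1 1)) C11 + 2 * pC M (cmat (P 1 2)) C12
      + pC M (2 \<cdot>\<^sub>m cmat (P 1 3) + (2 * \<i>) \<cdot>\<^sub>m cmat (P 1 4)) C13
      + pC M (cmat (P 2 2)) C22
      + pC M (2 \<cdot>\<^sub>m cmat (P 2 3) + (2 * \<i>) \<cdot>\<^sub>m cmat (P 2 4)) C23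
      + pC M (cmat (P 3 3) + cmat (P 4 4) + (2 * \<i>) \<cdot>\<^sub>m cmat (P 3 4)) C33"
      unfolding C11_def C22_def C12_def C13_def C23_def C33_def
      using H11[OF S d(1,2) cP R] H11[OF S d(3,4) cP R] H12[OF S cP R] H13[OF S d(1,2) cP cP R]
        H13[OF S d(3,4) cP cP R] H33[OF S cP cP cP R]
      by simp
    also have "\<dots> = pC M (cmat (P 1 1)) C11 + 2 * pC M (cmat (P 1 2)) C12
      + 2 * pC M (cmat (P 1 3)) C13 + (2 * \<i>) * pC M (cmat (P 1 4)) C13
      + pC M (cmat (P 2 2)) C22
      + 2 * pC M (cmat (P 2 3)) C23 + (2 * \<i>) * pC M (cmat (P 2 4)) C23
      + (pC M (cmat (P 3 3)) C33 + pC M (cmat (P 4 4)) C33 + (2 * \<i>) * pC M (cmat (P 3 4)) C33)"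
      using cP by (simp add: pC_add1 pC_smult1)
    finally show ?thesis by simp
  qed
  finally show ?thesis .
qed

lemma cH_entry: "cH X = Y \<Longrightarrow> X \<in> carrier_mat m n \<Longrightarrow> i < n \<Longrightarrow> j < m \<Longrightarrow> cnj (X $$ (j,i)) = Y $$ (i,j)"
  by auto

lemma herm_chain5: assumes U: "U \<in> carrier_mat M M" and A1: "A1 \<in> carrier_mat n M" and A2: "A2 \<in> carrier_mat n M"
  and R: "R \<in> carrier_mat n n" and H: "cH R = R"
  shows "cH (U * cH A1 * R * A2 * cH U) = U * cH A2 * R * A1 * cH U"
proof -
  have V: "U * cH A1 \<in> carrier_mat M n" using U A1 by auto
  have Z: "U * cH A1 * R \<in> carrier_mat M n" using V R by auto
  have X: "U * cH A1 * R * A2 \<in> carrier_mat M M" using Z A2 by auto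
  have "cH (U * cH A1 * R * A2 * cH U) = U * cH (U * cH A1 * R * A2)"
    using cH_mult[OF X cH_carrier[OF U]] by simp
  also have "cH (U * cH A1 * R * A2) = cH A2 * cH (U * cH A1 * R)" by (rule cH_mult[OF Z A2])
  also have "cH (U * cH A1 * R) = cH R * cH (U * cH A1)" by (rule cH_mult[OF V R])
  also have "cH (U * cH A1) = A1 * cH U" using cH_mult[OF U cH_carrier[OF A1]] by simp
  finally have e: "cH (U * cH A1 * R * A2 * cH U) = U * (cH A2 * (R * (A1 * cH U)))" using H by simp
  have c1: "A1 * cH U \<in> carrier_mat n M" using A1 U by auto
  have c2: "U * cH A2 \<in> carrier_mat M n" using A2 U by auto
  have c3: "U * cH A2 * R \<in> carrier_mat M n" using c2 R by auto
  have "U * (cH A2 * (R * (A1 * cH U))) = U * cH A2 * (R * (A1 * cH U))"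
    using assoc_sym[OF U cH_carrier[OF A2] mult_carrier_mat[OF R c1]] .
  also have "\<dots> = U * cH A2 * R * (A1 * cH U)" using assoc_sym[OF c2 R c1] .
  also have "\<dots> = U * cH A2 * R * A1 * cH U" using assoc_sym[OF c3 A1 cH_carrier[OF U]] .
  finally show ?thesis using e by simp
qed

lemma herm_chain3: assumes A: "A \<in> carrier_mat n M" and R: "R \<in> carrier_mat n n" and H: "cH R = R"
  shows "cH (cH A * R * A) = cH A * R * A"
proof -
  have "cH (cH A * R * A) = cH A * cH (cH A * R)" using cH_mult[OF mult_carrier_mat[OF cH_carrier[OF A] R] A] .
  also have "cH (cH A * R) = R * A" using cH_mult[OF cH_carrier[OF A] R] H by simp
  finally show ?thesis using assoc_sym[OF cH_carrier[OF A] R A] by simp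
qed

lemma herm_BB: "B1 \<in> carrier_mat n M \<Longrightarrow> B2 \<in> carrier_mat n M \<Longrightarrow> cH (cH B1 * B2) = cH B2 * B1"
  using cH_mult[of "cH B1" M n B2 M] by simp

lemma cH_F11g: assumes S: "sdims Nt Nr M S" and Ad: "Ad \<in> carrier_mat Nt M" and Bd: "Bd \<in> carrier_mat Nr M"
  and R: "R \<in> carrier_mat Nt Nt" and H: "cH R = R"
  shows "cH (F11g S R Ad Bd) = F11g S R Ad Bd"
proof -
  have c: "sA S \<in> carrier_mat Nt M" "sB S \<in> carrier_mat Nr M" "sU S \<in> carrier_mat M M"
    using S by (auto simp: sdims_def)
  define X1 where "X1 = sU S * cH (sA S) * R * sA S * cH (sU S)"
  define X2 where "X2 = sU S * cH (sA S) * R * Ad * cH (sU S)"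
  define X3 where "X3 = sU S * cH Ad * R * sA S * cH (sU S)"
  define X4 where "X4 = sU S * cH Ad * R * Ad * cH (sU S)"
  define Y1 where "Y1 = cH Bd * Bd"
  define Y2 where "Y2 = cH (sB S) * Bd"
  define Y3 where "Y3 = cH Bd * sB S"
  define Y4 where "Y4 = cH (sB S) * sB S"
  have Xc: "X1 \<in> carrier_mat M M" "X2 \<in> carrier_mat M M" "X3 \<in> carrier_mat M M" "X4 \<in> carrier_mat M M"
    "Y1 \<in> carrier_mat M M" "Y2 \<in> carrier_mat M M" "Y3 \<in> carrier_mat M M" "Y4 \<in> carrier_mat M M"
    unfolding X1_def X2_def X3_def X4_def Y1_def Y2_def Y3_def Y4_def using c Ad Bd R by auto
  have hX: "cH X1 = X1" "cH X2 = X3" "cH X3 = X2" "cH X4 = X4" "cH Y1 = Y1" "cH Y2 = Y3" "cH Y3 = Y2" "cH Y4 = Y4"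
    unfolding X1_def X2_def X3_def X4_def Y1_def Y2_def Y3_def Y4_def
    using herm_chain5[OF c(3) _ _ R H] herm_BB c Ad Bd by auto
  have F: "F11g S R Ad Bd = transpose_mat X1 \<odot> Y1 + transpose_mat X2 \<odot> Y2 + transpose_mat X3 \<odot> Y3 + transpose_mat X4 \<odot> Y4"
    unfolding F11g_def Let_def X1_def X2_def X3_def X4_def Y1_def Y2_def Y3_def Y4_def ..
  have d: "dim_row X1 = M" "dim_col X1 = M" "dim_row X2 = M" "dim_col X2 = M" "dim_row X3 = M" "dim_col X3 = M"
    "dim_row X4 = M" "dim_col X4 = M" "dim_row Y1 = M" "dim_col Y1 = M" "dim_row Y2 = M" "dim_col Y2 = M"
    "dim_row Y3 = M" "dim_col Y3 = M" "dim_row Y4 = M" "dim_col Y4 = M" using Xc by auto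
  show ?thesis unfolding F
  proof (rule eq_matI)
    fix i j assume "i < dim_row (transpose_mat X1 \<odot> Y1 + transpose_mat X2 \<odot> Y2 + transpose_mat X3 \<odot> Y3 + transpose_mat X4 \<odot> Y4)"
      "j < dim_col (transpose_mat X1 \<odot> Y1 + transpose_mat X2 \<odot> Y2 + transpose_mat X3 \<odot> Y3 + transpose_mat X4 \<odot> Y4)"
    then have ij: "i < M" "j < M" using d by auto
    have e: "cnj (X1 $$ (i,j)) = X1 $$ (j,i)" "cnj (X2 $$ (i,j)) = X3 $$ (j,i)" "cnj (X3 $$ (i,j)) = X2 $$ (j,i)"
      "cnj (X4 $$ (i,j)) = X4 $$ (j,i)" "cnj (Y1 $$ (j,i)) = Y1 $$ (i,j)" "cnj (Y2 $$ (j,i)) = Y3 $$ (i,j)"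
      "cnj (Y3 $$ (j,i)) = Y2 $$ (i,j)" "cnj (Y4 $$ (j,i)) = Y4 $$ (i,j)"
      using cH_entry[OF hX(1) Xc(1)] cH_entry[OF hX(2) Xc(2)] cH_entry[OF hX(3) Xc(3)] cH_entry[OF hX(4) Xc(4)]
        cH_entry[OF hX(5) Xc(5)] cH_entry[OF hX(6) Xc(6)] cH_entry[OF hX(7) Xc(7)] cH_entry[OF hX(8) Xc(8)] ij
      by auto
    show "cH (transpose_mat X1 \<odot> Y1 + transpose_mat X2 \<odot> Y2 + transpose_mat X3 \<odot> Y3 + transpose_mat X4 \<odot> Y4) $$ (i, j) =
      (transpose_mat X1 \<odot> Y1 + transpose_mat X2 \<odot> Y2 + transpose_mat X3 \<odot> Y3 + transpose_mat X4 \<odot> Y4) $$ (i, j)"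
      using ij d by (simp add: e)
  qed (use d in auto)
qed

lemma cH_F33m: assumes S: "sdims Nt Nr M S" and R: "R \<in> carrier_mat Nt Nt" and H: "cH R = R"
  shows "cH (F33m S R) = F33m S R"
proof -
  have c: "sA S \<in> carrier_mat Nt M" "sB S \<in> carrier_mat Nr M"
    using S by (auto simp: sdims_def)
  define X1 where "X1 = cH (sA S) * R * sA S"
  define Y1 where "Y1 = cH (sB S) * sB S"
  have Xc: "X1 \<in> carrier_mat M M" "Y1 \<in> carrier_mat M M"
    unfolding X1_def Y1_def using c R by auto
  have hX: "cH X1 = X1" "cH Y1 = Y1"
    unfolding X1_def Y1_def using herm_chain3[OF c(1) R H] herm_BB c by auto
  have F: "F33m S R = transpose_mat X1 \<odot> Y1"
    unfolding F33m_def X1_def Y1_def ..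
  have d: "dim_row X1 = M" "dim_col X1 = M" "dim_row Y1 = M" "dim_col Y1 = M" using Xc by auto
  show ?thesis unfolding F
  proof (rule eq_matI)
    fix i j assume "i < dim_row (transpose_mat X1 \<odot> Y1)" "j < dim_col (transpose_mat X1 \<odot> Y1)"
    then have ij: "i < M" "j < M" using d by auto
    have e: "cnj (X1 $$ (i,j)) = X1 $$ (j,i)" "cnj (Y1 $$ (j,i)) = Y1 $$ (i,j)"
      using cH_entry[OF hX(1) Xc(1)] cH_entry[OF hX(2) Xc(2)] ij by auto
    show "cH (transpose_mat X1 \<odot> Y1) $$ (i, j) = (transpose_mat X1 \<odot> Y1) $$ (i, j)"
      using ij d by (simp add: e)
  qed (use d in auto)
qed

lemma Re_herm_sym: "cH C = C \<Longrightarrow> C \<in> carrier_mat M M \<Longrightarrow> transpose_mat (Re_mat C) = Re_mat C"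
proof (rule eq_matI)
  fix i j assume H: "cH C = C" and C: "C \<in> carrier_mat M M"
    and "i < dim_row (Re_mat C)" "j < dim_col (Re_mat C)"
  then have ij: "i < M" "j < M" by auto
  have "cnj (C $$ (i,j)) = C $$ (j,i)" using cH_entry[OF H C] ij by auto
  then have "Re (C $$ (j,i)) = Re (C $$ (i,j))" by (metis complex_cnj_cancel_iff complex_cnj_complex_of_real Re_complex_of_real cnj.simps(1))
  then show "transpose_mat (Re_mat C) $$ (i, j) = Re_mat C $$ (i, j)" using ij C by auto
qed auto

lemma transpose_neg: "transpose_mat (- A) = - transpose_mat (A :: 'a :: group_add mat)"
  by (rule eq_matI) auto

lemma block4_sym: assumes c: "\<And>p q. p < 4 \<Longrightarrow> q < 4 \<Longrightarrow> bl!p!q \<in> carrier_mat M M"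
  and s: "\<And>p q. p < 4 \<Longrightarrow> q < 4 \<Longrightarrow> transpose_mat (bl!q!p) = bl!p!q" and M: "0 < M"
  shows "transpose_mat (block4 M bl) = block4 M bl"
proof (rule eq_matI)
  fix i j assume "i < dim_row (block4 M bl)" "j < dim_col (block4 M bl)"
  then have ij: "i < 4*M" "j < 4*M" by auto
  then have pq: "i div M < 4" "j div M < 4" "i mod M < M" "j mod M < M" using M
    by (auto simp: less_mult_imp_div_less)
  have "transpose_mat (block4 M bl) $$ (i,j) = (bl ! (j div M) ! (i div M)) $$ (j mod M, i mod M)"
    using ij by (simp add: block4_idx)
  also have "\<dots> = transpose_mat (bl ! (j div M) ! (i div M)) $$ (i mod M, j mod M)"
    using c[OF pq(2,1)] pq by auto
  also have "\<dots> = (bl ! (i div M) ! (j div M)) $$ (i mod M, j mod M)" using s[OF pq(1,2)] by simp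
  also have "\<dots> = block4 M bl $$ (i,j)" using ij by (simp add: block4_idx)
  finally show "transpose_mat (block4 M bl) $$ (i,j) = block4 M bl $$ (i,j)" .
qed auto

lemma FLc_sym: assumes S: "sdims Nt Nr M S" and M: "0 < M" and R: "R \<in> carrier_mat Nt Nt" and H: "cH R = R"
  shows "transpose_mat (FLc M S R) = FLc M S R"
proof -
  have d: "sAt S \<in> carrier_mat Nt M" "sBt S \<in> carrier_mat Nr M" "sAp S \<in> carrier_mat Nt M" "sBp S \<in> carrier_mat Nr M"
    using S unfolding sdims_def by auto
  define C11 where "C11 = F11g S R (sAt S) (sBt S)"
  define C22 where "C22 = F11g S R (sAp S) (sBp S)"
  define C12 where "C12 = F12m S R"
  define C13 where "C13 = F13g S R (sAt S) (sBt S)"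
  define C23 where "C23 = F13g S R (sAp S) (sBp S)"
  define C33 where "C33 = F33m S R"
  have Cc: "C11 \<in> carrier_mat M M" "C22 \<in> carrier_mat M M" "C12 \<in> carrier_mat M M"
    "C13 \<in> carrier_mat M M" "C23 \<in> carrier_mat M M" "C33 \<in> carrier_mat M M"
    using linC_F11g[OF S d(1,2)] linC_F11g[OF S d(3,4)] linC_F12m[OF S]
      linC_F13g[OF S d(1,2)] linC_F13g[OF S d(3,4)] linC_F33m[OF S] R
    unfolding linC_def C11_def C22_def C12_def C13_def C23_def C33_def by auto
  have h: "transpose_mat (Re_mat C11) = Re_mat C11" "transpose_mat (Re_mat C22) = Re_mat C22"
    "transpose_mat (Re_mat C33) = Re_mat C33"
    using Re_herm_sym[OF cH_F11g[OF S d(1,2) R H] Cc(1)[unfolded C11_def]]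
      Re_herm_sym[OF cH_F11g[OF S d(3,4) R H] Cc(2)[unfolded C22_def]]
      Re_herm_sym[OF cH_F33m[OF S R H] Cc(6)[unfolded C33_def]]
    unfolding C11_def C22_def C33_def by auto
  define bl where "bl = [[Re_mat C11, Re_mat C12, Re_mat C13, - Im_mat C13],
       [transpose_mat (Re_mat C12), Re_mat C22, Re_mat C23, - Im_mat C23],
       [transpose_mat (Re_mat C13), transpose_mat (Re_mat C23), Re_mat C33, - Im_mat C33],
       [- transpose_mat (Im_mat C13), - transpose_mat (Im_mat C23), - transpose_mat (Im_mat C33), Re_mat C33]]"
  have F: "FLc M S R = block4 M bl"
    unfolding FLc_def Let_def bl_def C11_def C22_def C12_def C13_def C23_def C33_def ..
  show ?thesis unfolding F
  proof (rule block4_sym[OF _ _ M])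
    fix p q :: nat assume "p < 4" "q < 4"
    then show "bl ! p ! q \<in> carrier_mat M M" unfolding less4 bl_def using Cc
      by (elim disjE) (simp_all add: uminus_carrier_mat)
  next
    fix p q :: nat assume "p < 4" "q < 4"
    then show "transpose_mat (bl ! q ! p) = bl ! p ! q" unfolding less4 bl_def using h
      by (elim disjE) (simp_all add: transpose_neg)
  qed
qed

lemma unitm_dims[simp]: "dim_row (unitm n m i j) = n" "dim_col (unitm n m i j) = m"
  by (auto simp: unitm_def)
lemma unitm_carrier[simp]: "unitm n m i j \<in> carrier_mat n m"
  by (metis unitm_dims carrier_matI)
lemma unitm_idx[simp]: "a < n \<Longrightarrow> b < m \<Longrightarrow> unitm n m i j $$ (a,b) = (if a = i \<and> b = j then 1 else 0)"
  by (auto simp: unitm_def)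

lemma sum_delta_l: "(\<Sum>k<(m::nat). (if k = j then 1 else 0) * f k) = (if j < m then f j else (0::'a::comm_ring_1))"
proof -
  have "(\<Sum>k<m. (if k = j then 1 else 0) * f k) = (\<Sum>k<m. if k = j then f k else 0)" by (rule sum.cong) auto
  then show ?thesis using sum.delta[OF finite_lessThan[of m], of j f] by simp
qed

lemma sum_delta_r: "(\<Sum>k<(m::nat). f k * (if k = j then 1 else 0)) = (if j < m then f j else (0::'a::comm_ring_1))"
proof -
  have "(\<Sum>k<m. f k * (if k = j then 1 else 0)) = (\<Sum>k<m. if k = j then f k else 0)" by (rule sum.cong) auto
  then show ?thesis using sum.delta[OF finite_lessThan[of m], of j f] by simp
qed

lemma mtrace_mult: "A \<in> carrier_mat n k \<Longrightarrow> B \<in> carrier_mat k n \<Longrightarrow> mtrace (A * B) = (\<Sum>a<n. \<Sum>b<k. A$$(a,b) * B$$(b,a))"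
  by (simp add: mtrace_def mult_idx del: index_mult_mat(1))

lemma E_mult: assumes "Y \<in> carrier_mat m p" "b < n" "a < p" "i < n" "j < m"
  shows "(unitm n m i j * Y) $$ (b,a) = (if b = i then Y $$ (j,a) else 0)"
proof -
  have "(unitm n m i j * Y) $$ (b,a) = (\<Sum>k<m. (if b = i \<and> k = j then 1 else 0) * Y $$ (k,a))"
    using assms by (simp add: mult_idx del: index_mult_mat(1))
  also have "\<dots> = (if b = i then (\<Sum>k<m. (if k = j then 1 else 0) * Y $$ (k,a)) else 0)" by auto
  also have "\<dots> = (if b = i then Y $$ (j,a) else 0)" using assms by (simp add: sum_delta_l)
  finally show ?thesis .
qed

lemma mult_cHE: assumes "Y \<in> carrier_mat n' m" "b < n'" "a < n" "i < n" "j < m"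
  shows "(Y * cH (unitm n m i j)) $$ (b,a) = (if a = i then Y $$ (b,j) else 0)"
proof -
  have "(Y * cH (unitm n m i j)) $$ (b,a) = (\<Sum>k<m. Y $$ (b,k) * (if a = i \<and> k = j then 1 else 0))"
    using assms by (simp add: mult_idx if_distrib[of cnj] del: index_mult_mat(1) cong: if_cong)
  also have "\<dots> = (if a = i then (\<Sum>k<m. Y $$ (b,k) * (if k = j then 1 else 0)) else 0)" by auto
  also have "\<dots> = (if a = i then Y $$ (b,j) else 0)" using assms by (simp add: sum_delta_r)
  finally show ?thesis .
qed

lemma Rt: assumes W: "W \<in> carrier_mat n m" and E: "E \<in> carrier_mat n m"
  shows "(W + (c * complex_of_real t) \<cdot>\<^sub>m E) * cH (W + (c * complex_of_real t) \<cdot>\<^sub>m E)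
    = W * cH W + complex_of_real t \<cdot>\<^sub>m (c \<cdot>\<^sub>m (E * cH W) + cnj c \<cdot>\<^sub>m (W * cH E))
      + complex_of_real (t^2) \<cdot>\<^sub>m ((c * cnj c) \<cdot>\<^sub>m (E * cH E))"
proof (rule eq_matI)
  fix a b assume "a < dim_row (W * cH W + complex_of_real t \<cdot>\<^sub>m (c \<cdot>\<^sub>m (E * cH W) + cnj c \<cdot>\<^sub>m (W * cH E))
      + complex_of_real (t^2) \<cdot>\<^sub>m ((c * cnj c) \<cdot>\<^sub>m (E * cH E)))"
    "b < dim_col (W * cH W + complex_of_real t \<cdot>\<^sub>m (c \<cdot>\<^sub>m (E * cH W) + cnj c \<cdot>\<^sub>m (W * cH E))
      + complex_of_real (t^2) \<cdot>\<^sub>m ((c * cnj c) \<cdot>\<^sub>m (E * cH E)))"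
  then have ab: "a < n" "b < n" using W E by auto
  show "((W + (c * complex_of_real t) \<cdot>\<^sub>m E) * cH (W + (c * complex_of_real t) \<cdot>\<^sub>m E)) $$ (a, b) =
    (W * cH W + complex_of_real t \<cdot>\<^sub>m (c \<cdot>\<^sub>m (E * cH W) + cnj c \<cdot>\<^sub>m (W * cH E))
      + complex_of_real (t^2) \<cdot>\<^sub>m ((c * cnj c) \<cdot>\<^sub>m (E * cH E))) $$ (a, b)"
    using ab W E
    by (simp add: mult_idx sum.distrib sum_distrib_left ring_distribs power2_eq_square mult_ac del: index_mult_mat(1))
qed (use W E in auto)

lemma tr_R1: assumes Q: "Q \<in> carrier_mat n n" and W: "W \<in> carrier_mat n m" and ij: "i < n" "j < m"
  shows "mtrace (Q * (c \<cdot>\<^sub>m (unitm n m i j * cH W) + cnj c \<cdot>\<^sub>m (W * cH (unitm n m i j))))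
     = c * cnj ((cH Q * W) $$ (i,j)) + cnj c * (Q * W) $$ (i,j)"
proof -
  have "mtrace (Q * (c \<cdot>\<^sub>m (unitm n m i j * cH W) + cnj c \<cdot>\<^sub>m (W * cH (unitm n m i j))))
     = (\<Sum>a<n. \<Sum>b<n. Q $$ (a,b) * (c * (if b = i then cnj (W $$ (a,j)) else 0) + cnj c * (if a = i then W $$ (b,j) else 0)))"
  proof -
    have X: "c \<cdot>\<^sub>m (unitm n m i j * cH W) + cnj c \<cdot>\<^sub>m (W * cH (unitm n m i j)) \<in> carrier_mat n n"
      using W by auto
    show ?thesis unfolding mtrace_mult[OF Q X]
      by (intro sum.cong refl) (use Q W ij carrier_matD[OF W] in \<open>simp add: E_mult[of _ m n] mult_cHE[of _ n m] del: index_mult_mat(1)\<close>)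
  qed
  also have "\<dots> = (\<Sum>a<n. \<Sum>b<n. c * (if b = i then Q $$ (a,b) * cnj (W $$ (a,j)) else 0)
       + cnj c * (if a = i then Q $$ (a,b) * W $$ (b,j) else 0))"
    by (intro sum.cong refl) (simp add: ring_distribs)
  also have "\<dots> = c * (\<Sum>a<n. \<Sum>b<n. if b = i then Q $$ (a,b) * cnj (W $$ (a,j)) else 0)
       + cnj c * (\<Sum>a<n. \<Sum>b<n. if a = i then Q $$ (a,b) * W $$ (b,j) else 0)"
    by (simp only: sum.distrib sum_distrib_left)
  finally have T1: "mtrace (Q * (c \<cdot>\<^sub>m (unitm n m i j * cH W) + cnj c \<cdot>\<^sub>m (W * cH (unitm n m i j)))) = c * (\<Sum>a<n. \<Sum>b<n. if b = i then Q $$ (a,b) * cnj (W $$ (a,j)) else 0) + cnj c * (\<Sum>a<n. \<Sum>b<n. if a = i then Q $$ (a,b) * W $$ (b,j) else 0)" .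
  have s1: "(\<Sum>a<n. \<Sum>b<n. if b = i then Q $$ (a,b) * cnj (W $$ (a,j)) else 0) = (\<Sum>a<n. Q $$ (a,i) * cnj (W $$ (a,j)))"
    using ij by (simp add: sum.delta)
  have s2: "(\<Sum>a<n. \<Sum>b<n. if a = i then Q $$ (a,b) * W $$ (b,j) else 0) = (\<Sum>b<n. Q $$ (i,b) * W $$ (b,j))"
  proof -
    have "(\<Sum>a<n. \<Sum>b<n. if a = i then Q $$ (a,b) * W $$ (b,j) else 0) = (\<Sum>a<n. if a = i then (\<Sum>b<n. Q $$ (a,b) * W $$ (b,j)) else 0)"
      by (intro sum.cong refl) simp
    then show ?thesis using ij by (simp add: sum.delta)
  qed
  have "c * (\<Sum>a<n. \<Sum>b<n. if b = i then Q $$ (a,b) * cnj (W $$ (a,j)) else 0)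
       + cnj c * (\<Sum>a<n. \<Sum>b<n. if a = i then Q $$ (a,b) * W $$ (b,j) else 0)
     = c * (\<Sum>a<n. Q $$ (a,i) * cnj (W $$ (a,j))) + cnj c * (\<Sum>b<n. Q $$ (i,b) * W $$ (b,j))"
    by (simp only: s1 s2)
  also have "\<dots> = c * cnj ((cH Q * W) $$ (i,j)) + cnj c * (Q * W) $$ (i,j)"
    using Q W ij by (simp add: mult_idx mult.commute del: index_mult_mat(1))
  finally show ?thesis using T1 by simp
qed

lemma minv_sym: assumes F: "F \<in> carrier_mat n n" and d: "det F \<noteq> (0::'a::field)" and s: "transpose_mat F = F"
  shows "transpose_mat (minv F) = minv F"
proof -
  note G = minv_props[OF F d]
  have TG: "transpose_mat (minv F) \<in> carrier_mat n n" using G by auto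
  have "transpose_mat (minv F) * F = transpose_mat (minv F) * transpose_mat F" using s by simp
  also have "\<dots> = transpose_mat (F * minv F)" using transpose_mult[OF F G(1)] by simp
  also have "\<dots> = 1\<^sub>m n" using G by simp
  finally have e: "transpose_mat (minv F) * F = 1\<^sub>m n" .
  have "transpose_mat (minv F) = transpose_mat (minv F) * (F * minv F)" using G TG by (simp add: right_mult_one_mat)
  also have "\<dots> = (transpose_mat (minv F) * F) * minv F" using assoc_sym[OF TG F G(1)] .
  also have "\<dots> = minv F" unfolding e using G by simp
  finally show ?thesis .
qed

lemma Qcore_carrier: assumes "sdims Nt Nr M S" shows "Qcore M S Phi \<in> carrier_mat Nt Nt"
proof -
  have d: "sAt S \<in> carrier_mat Nt M" "sBt S \<in> carrier_mat Nr M" "sAp S \<in> carrier_mat Nt M" "sBp S \<in> carrier_mat Nr M"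
    using assms unfolding sdims_def by auto
  have cP: "\<And>p q. cmat (blk M Phi p q) \<in> carrier_mat M M" by simp
  note QC = Q_carriers[OF assms d(1,2) cP cP cP] Q_carriers[OF assms d(3,4) cP cP cP]
  show ?thesis unfolding Qcore_def Let_def using QC by simp
qed

lemma trinv_dir:
  assumes S: "sdims Nt Nr M S" and M: "0 < M" and W: "W \<in> carrier_mat Nt m" and ij: "i < Nt" "j < m"
    and inv: "invertible_mat (FIM M L ss2 S W)"
  shows "((\<lambda>t. mtrace (minv (FIM M L ss2 S (W + (c * complex_of_real t) \<cdot>\<^sub>m unitm Nt m i j)))) has_real_derivative
     - Re (cnj c * ((Qmat M L ss2 S W + cH (Qmat M L ss2 S W)) * W) $$ (i,j))) (at 0)"
proof -
  define k where "k = 2 * real L / ss2"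
  define E where "E = unitm Nt m i j"
  define R0 where "R0 = W * cH W"
  define R1 where "R1 = c \<cdot>\<^sub>m (E * cH W) + cnj c \<cdot>\<^sub>m (W * cH E)"
  define R2 where "R2 = (c * cnj c) \<cdot>\<^sub>m (E * cH E)"
  have Ec: "E \<in> carrier_mat Nt m" by (simp add: E_def)
  have Rc: "R0 \<in> carrier_mat Nt Nt" "R1 \<in> carrier_mat Nt Nt" "R2 \<in> carrier_mat Nt Nt"
    unfolding R0_def R1_def R2_def using W Ec by auto
  note L = linR_FLc[OF S M, unfolded linR_def]
  have FLcc: "\<And>R. R \<in> carrier_mat Nt Nt \<Longrightarrow> FLc M S R \<in> carrier_mat (4*M) (4*M)" using L by auto
  define F0 where "F0 = k \<cdot>\<^sub>m FLc M S R0"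
  define F1 where "F1 = k \<cdot>\<^sub>m FLc M S R1"
  define F2 where "F2 = k \<cdot>\<^sub>m FLc M S R2"
  have Fc: "F0 \<in> carrier_mat (4*M) (4*M)" "F1 \<in> carrier_mat (4*M) (4*M)" "F2 \<in> carrier_mat (4*M) (4*M)"
    unfolding F0_def F1_def F2_def using FLcc Rc by auto
  have F0e: "FIM M L ss2 S W = F0" unfolding F0_def k_def R0_def by (rule FIM_FLc)
  have Ft: "FIM M L ss2 S (W + (c * complex_of_real t) \<cdot>\<^sub>m E) = F0 + t \<cdot>\<^sub>m F1 + t^2 \<cdot>\<^sub>m F2" for t
  proof -
    have "FIM M L ss2 S (W + (c * complex_of_real t) \<cdot>\<^sub>m E)
       = k \<cdot>\<^sub>m FLc M S (R0 + complex_of_real t \<cdot>\<^sub>m R1 + complex_of_real (t^2) \<cdot>\<^sub>m R2)"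
      unfolding FIM_FLc k_def Rt[OF W Ec] R0_def R1_def R2_def ..
    also have "FLc M S (R0 + complex_of_real t \<cdot>\<^sub>m R1 + complex_of_real (t^2) \<cdot>\<^sub>m R2)
       = FLc M S R0 + t \<cdot>\<^sub>m FLc M S R1 + t^2 \<cdot>\<^sub>m FLc M S R2"
    proof -
      have a1: "R0 + complex_of_real t \<cdot>\<^sub>m R1 \<in> carrier_mat Nt Nt" "complex_of_real (t^2) \<cdot>\<^sub>m R2 \<in> carrier_mat Nt Nt"
        "complex_of_real t \<cdot>\<^sub>m R1 \<in> carrier_mat Nt Nt" using Rc by auto
      have "FLc M S (R0 + complex_of_real t \<cdot>\<^sub>m R1 + complex_of_real (t^2) \<cdot>\<^sub>m R2)
          = FLc M S (R0 + complex_of_real t \<cdot>\<^sub>m R1) + FLc M S (complex_of_real (t^2) \<cdot>\<^sub>m R2)"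
        using L a1 by blast
      also have "FLc M S (R0 + complex_of_real t \<cdot>\<^sub>m R1) = FLc M S R0 + FLc M S (complex_of_real t \<cdot>\<^sub>m R1)"
        using L a1 Rc by blast
      also have "FLc M S (complex_of_real t \<cdot>\<^sub>m R1) = t \<cdot>\<^sub>m FLc M S R1" using L Rc by blast
      also have "FLc M S (complex_of_real (t^2) \<cdot>\<^sub>m R2) = t^2 \<cdot>\<^sub>m FLc M S R2" using L Rc by blast
      finally show ?thesis .
    qed
    finally show ?thesis
      unfolding F0_def F1_def F2_def
      by (intro eq_matI) (use FLcc[OF Rc(1)] FLcc[OF Rc(2)] FLcc[OF Rc(3)] in \<open>auto simp: algebra_simps\<close>)
  qed
  have d0: "det F0 \<noteq> 0" using invertible_det[OF inv[unfolded F0e] Fc(1)] .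
  have D: "((\<lambda>t. mtrace (minv (F0 + t \<cdot>\<^sub>m F1 + t^2 \<cdot>\<^sub>m F2))) has_real_derivative
          - mtrace (minv F0 * F1 * minv F0)) (at 0)"
    by (rule trinv_deriv[OF Fc d0])
  define G0 where "G0 = minv F0"
  note G0p = minv_props[OF Fc(1) d0, folded G0_def]
  have hR0: "cH R0 = R0" unfolding R0_def using cH_mult[OF W cH_carrier[OF W]] by simp
  have F0s: "transpose_mat F0 = F0"
  proof -
    have "transpose_mat (FLc M S R0) = FLc M S R0" by (rule FLc_sym[OF S M Rc(1) hR0])
    moreover have "transpose_mat (k \<cdot>\<^sub>m FLc M S R0) = k \<cdot>\<^sub>m transpose_mat (FLc M S R0)"
      by (rule eq_matI) auto
    ultimately show ?thesis unfolding F0_def by simp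
  qed
  have G0s: "transpose_mat G0 = G0" unfolding G0_def by (rule minv_sym[OF Fc(1) d0 F0s])
  define Phi where "Phi = G0 * G0"
  have Phic: "Phi \<in> carrier_mat (4*M) (4*M)" unfolding Phi_def using G0p by auto
  have Phis: "transpose_mat Phi = Phi" unfolding Phi_def using transpose_mult[OF G0p(1) G0p(1)] G0s by simp
  have "mtrace (G0 * F1 * G0) = mtrace (G0 * (G0 * F1))"
    using mtrace_comm[OF mult_carrier_mat[OF G0p(1) Fc(2)] G0p(1)] .
  also have "\<dots> = mtrace (Phi * F1)" unfolding Phi_def using assoc_sym[OF G0p(1) G0p(1) Fc(2)] by simp
  also have "\<dots> = k * mtrace (Phi * FLc M S R1)"
    unfolding F1_def using mult_smult_distrib[OF Phic FLcc[OF Rc(2)]] mtrace_smult[OF mult_carrier_mat[OF Phic FLcc[OF Rc(2)]]]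
    by simp
  also have "\<dots> = k * Re (mtrace (Qcore M S Phi * R1))" using trace_FLc[OF S M Phic Phis Rc(2)] by simp
  also have "\<dots> = Re (mtrace (Qmat M L ss2 S W * R1))"
  proof -
    have "Qmat M L ss2 S W = complex_of_real k \<cdot>\<^sub>m Qcore M S Phi"
      unfolding Qmat_Qcore k_def Phi_def G0_def F0e ..
    then have "mtrace (Qmat M L ss2 S W * R1) = complex_of_real k * mtrace (Qcore M S Phi * R1)"
      using mtrace_smult_mult[OF Qcore_carrier[OF S] Rc(2)] by simp
    then show ?thesis by simp
  qed
  also have "\<dots> = Re (cnj c * ((Qmat M L ss2 S W + cH (Qmat M L ss2 S W)) * W) $$ (i,j))"
  proof -
    define Q where "Q = Qmat M L ss2 S W"
    have Qc: "Q \<in> carrier_mat Nt Nt" unfolding Q_def Qmat_Qcore using Qcore_carrier[OF S] by simp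
    have "mtrace (Q * R1) = c * cnj ((cH Q * W) $$ (i,j)) + cnj c * (Q * W) $$ (i,j)"
      unfolding R1_def E_def by (rule tr_R1[OF Qc W ij])
    moreover have "((Q + cH Q) * W) $$ (i,j) = (Q * W) $$ (i,j) + (cH Q * W) $$ (i,j)"
      using add_mult_distrib_mat[OF Qc cH_carrier[OF Qc] W] ij W Qc by simp
    moreover have "Re (c * cnj z) = Re (cnj c * z)" for z by simp
    ultimately show ?thesis unfolding Q_def[symmetric] by (simp add: ring_distribs)
  qed
  finally have val: "mtrace (minv F0 * F1 * minv F0) = Re (cnj c * ((Qmat M L ss2 S W + cH (Qmat M L ss2 S W)) * W) $$ (i,j))"
    unfolding G0_def .
  show ?thesis using D unfolding val E_def[symmetric] Ft .
qed

lemma dsq: "((\<lambda>t. (cmod (a + (c * complex_of_real t) * e))^2) has_real_derivative 2 * Re (cnj a * (c * e))) (at 0)"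
proof -
  have eq: "(\<lambda>t. (cmod (a + (c * complex_of_real t) * e))^2) = (\<lambda>t. (Re a + t * Re (c*e))^2 + (Im a + t * Im (c*e))^2)"
  proof
    fix t
    have "a + (c * complex_of_real t) * e = a + complex_of_real t * (c * e)" by (simp add: ac_simps)
    then show "(cmod (a + (c * complex_of_real t) * e))^2 = (Re a + t * Re (c*e))^2 + (Im a + t * Im (c*e))^2"
      by (simp add: cmod_power2 algebra_simps)
  qed
  have "((\<lambda>t. (Re a + t * Re (c*e))^2 + (Im a + t * Im (c*e))^2) has_real_derivative
     2 * (Re a + 0 * Re (c*e)) * (1 * Re (c*e)) + 2 * (Im a + 0 * Im (c*e)) * (1 * Im (c*e))) (at 0)"
    by (intro derivative_eq_intros) auto
  moreover have "2 * (Re a + 0 * Re (c*e)) * (1 * Re (c*e)) + 2 * (Im a + 0 * Im (c*e)) * (1 * Im (c*e)) = 2 * Re (cnj a * (c * e))"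
    by (simp add: algebra_simps)
  ultimately show ?thesis unfolding eq by (rule DERIV_cong)
qed

lemma mult_E: assumes "Y \<in> carrier_mat p n" "b < p" "a < m" "i < n" "j < m"
  shows "(Y * unitm n m i j) $$ (b,a) = (if a = j then Y $$ (b,i) else 0)"
proof -
  have "(Y * unitm n m i j) $$ (b,a) = (\<Sum>k<n. Y $$ (b,k) * (if k = i \<and> a = j then 1 else 0))"
    using assms by (simp add: mult_idx del: index_mult_mat(1))
  also have "\<dots> = (if a = j then (\<Sum>k<n. Y $$ (b,k) * (if k = i then 1 else 0)) else 0)" by auto
  also have "\<dots> = (if a = j then Y $$ (b,i) else 0)" using assms by (simp add: sum_delta_r)
  finally show ?thesis .
qed

lemma hwx: assumes V: "V \<in> carrier_mat Nt (K+Ns)" and H: "H \<in> carrier_mat Nt K" and k: "k < K"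
  shows "\<And>j'. j' < K \<Longrightarrow> hw H (Wc_of K V) k j' = (cH H * V) $$ (k,j')"
    "\<And>j'. j' < Ns \<Longrightarrow> hw H (Ws_of K V) k j' = (cH H * V) $$ (k,K+j')"
    "dim_col (Ws_of K V) = Ns"
proof -
  fix j' assume j: "j' < K"
  have c: "Wc_of K V \<in> carrier_mat Nt K" using V by (auto simp: Wc_of_def)
  show "hw H (Wc_of K V) k j' = (cH H * V) $$ (k,j')"
    unfolding hw_def using c V H k j by (simp add: mult_idx Wc_of_def del: index_mult_mat(1))
next
  fix j' assume j: "j' < Ns"
  have c: "Ws_of K V \<in> carrier_mat Nt Ns" using V by (auto simp: Ws_of_def)
  show "hw H (Ws_of K V) k j' = (cH H * V) $$ (k,K+j')"
    unfolding hw_def using c V H k j by (simp add: mult_idx Ws_of_def del: index_mult_mat(1))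
next
  show "dim_col (Ws_of K V) = Ns" using V by (auto simp: Ws_of_def)
qed

lemma xt: assumes W: "W \<in> carrier_mat Nt m" and H: "H \<in> carrier_mat Nt K" and k: "k < K" and j': "j' < m"
  and ij: "i < Nt" "j < m"
  shows "(cH H * (W + s \<cdot>\<^sub>m unitm Nt m i j)) $$ (k,j') = (cH H * W) $$ (k,j') + s * (if j' = j then cnj (H $$ (i,k)) else 0)"
proof -
  have "cH H * (W + s \<cdot>\<^sub>m unitm Nt m i j) = cH H * W + s \<cdot>\<^sub>m (cH H * unitm Nt m i j)"
    using mult_add_distrib_mat[OF cH_carrier[OF H] W smult_carrier_mat[OF unitm_carrier]]
      mult_smult_distrib[OF cH_carrier[OF H] unitm_carrier] by simp
  moreover have "(cH H * unitm Nt m i j) $$ (k,j') = (if j' = j then cnj (H $$ (i,k)) else 0)"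
    using mult_E[OF cH_carrier[OF H] _ j' ij] k H carrier_matD[OF H] ij by auto
  ultimately show ?thesis using k j' H W by simp
qed

lemma Re_complex_of_real_mult: "Re (complex_of_real r * z) = r * Re z" by simp

lemma sum_if_eq: "finite A \<Longrightarrow> (\<Sum>x\<in>A. if x = j then X else (0::'a::comm_monoid_add)) = (if j \<in> A then X else 0)"
  by (simp add: sum.delta)

lemma rate_dir:
  assumes H: "H \<in> carrier_mat Nt K" and W: "W \<in> carrier_mat Nt (K+Ns)" and ij: "i < Nt" "j < K+Ns"
    and k: "k < K" and sc: "0 < sc2 k"
  shows "((\<lambda>t. rate K H sc2 (W + (c * complex_of_real t) \<cdot>\<^sub>m unitm Nt (K+Ns) i j) k) has_real_derivative
    Re (cnj c * (2 * H$$(i,k) * ((if j = k then cnj (eta K H sc2 W k) else 0)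
        - complex_of_real (beta K H sc2 W k) * (cH H * W)$$(k,j))))) (at 0)"
proof -
  define m where "m = K + Ns"
  define E where "E = unitm Nt m i j"
  define V where "V t = W + (c * complex_of_real t) \<cdot>\<^sub>m E" for t
  define a where "a j' = (cH H * W) $$ (k,j')" for j'
  define e where "e = cnj (H $$ (i,k))"
  define \<delta> where "\<delta> j' = (if j' = j then e else 0)" for j'
  have Vc: "\<And>t. V t \<in> carrier_mat Nt (K+Ns)" using W by (simp add: V_def E_def m_def)
  have xx: "\<And>t j'. j' < K+Ns \<Longrightarrow> (cH H * V t) $$ (k,j') = a j' + (c * complex_of_real t) * \<delta> j'"
    unfolding V_def E_def a_def \<delta>_def e_def m_def using xt[OF W H k _ ij] by simp
  define sf where "sf t = (cmod (a k + (c * complex_of_real t) * \<delta> k))^2" for t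
  define If where "If t = (\<Sum>j'\<in>{..<K}-{k}. (cmod (a j' + (c * complex_of_real t) * \<delta> j'))^2)
      + (\<Sum>j'<Ns. (cmod (a (K+j') + (c * complex_of_real t) * \<delta> (K+j')))^2) + sc2 k" for t
  have Iint_eq: "Iint K H sc2 (V t) k = If t" for t
  proof -
    have h1: "(\<Sum>j'\<in>{..<K}-{k}. (cmod (hw H (Wc_of K (V t)) k j'))^2)
      = (\<Sum>j'\<in>{..<K}-{k}. (cmod (a j' + (c * complex_of_real t) * \<delta> j'))^2)"
      by (intro sum.cong refl) (simp add: hwx(1)[OF Vc H k] xx)
    have h2: "(\<Sum>j'<dim_col (Ws_of K (V t)). (cmod (hw H (Ws_of K (V t)) k j'))^2)
      = (\<Sum>j'<Ns. (cmod (a (K+j') + (c * complex_of_real t) * \<delta> (K+j')))^2)"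
      unfolding hwx(3)[OF Vc H k] by (intro sum.cong refl) (simp add: hwx(2)[OF Vc H k] xx)
    show ?thesis unfolding Iint_def h1 h2 If_def ..
  qed
  have hwk: "hw H (Wc_of K (V t)) k k = a k + (c * complex_of_real t) * \<delta> k" for t
    using hwx(1)[OF Vc H k k] xx[of k t] k by simp
  have rate_eq: "rate K H sc2 (V t) k = ln (1 + sf t / If t)" for t
    unfolding rate_def Iint_eq hwk sf_def ..
  have V0: "V 0 = W" unfolding V_def E_def m_def using W by (intro eq_matI) auto
  have I0: "If 0 = Iint K H sc2 W k" using Iint_eq[of 0] V0 by simp
  have s0: "sf 0 = (cmod (hw H (Wc_of K W) k k))^2" using hwk[of 0] V0 by (simp add: sf_def)
  have hwa: "hw H (Wc_of K W) k k = a k" using hwk[of 0] V0 by simp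
  have Ipos: "0 < If 0" unfolding If_def using sc by (intro add_nonneg_pos add_nonneg_nonneg sum_nonneg) auto
  have snn: "0 \<le> sf 0" unfolding sf_def by simp
  define s' where "s' = 2 * Re (cnj (a k) * (c * \<delta> k))"
  define I' where "I' = (\<Sum>j'\<in>{..<K}-{k}. 2 * Re (cnj (a j') * (c * \<delta> j')))
      + (\<Sum>j'<Ns. 2 * Re (cnj (a (K+j')) * (c * \<delta> (K+j')))) + 0"
  have ds: "(sf has_real_derivative s') (at 0)" unfolding sf_def s'_def by (rule dsq)
  have dI: "(If has_real_derivative I') (at 0)" unfolding If_def[abs_def] I'_def
    by (intro DERIV_add DERIV_sum dsq DERIV_const)
  have g0: "0 < 1 + sf 0 / If 0" using Ipos snn by (simp add: add_pos_nonneg)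
  have dr: "((\<lambda>t. ln (1 + sf t / If t)) has_real_derivative
      (1 / (1 + sf 0 / If 0)) * (0 + (s' * If 0 - sf 0 * I') / (If 0 * If 0))) (at 0)"
    by (rule DERIV_chain2[OF DERIV_ln_divide[OF g0] DERIV_add[OF DERIV_const DERIV_divide[OF ds dI]]])
       (use Ipos in auto)
  define X where "X j' = Re (cnj c * (H $$ (i,k) * a j'))" for j'
  have trm: "2 * Re (cnj (a j') * (c * \<delta> j')) = (if j' = j then 2 * X j else 0)" for j'
  proof -
    have "Re (cnj (a j) * (c * cnj (H $$ (i,k)))) = Re (cnj c * (H $$ (i,k) * a j))"
    proof -
      have "cnj (a j) * (c * cnj (H $$ (i,k))) = cnj (cnj c * (H $$ (i,k) * a j))" by simp
      then show ?thesis by (simp add: algebra_simps)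
    qed
    then show ?thesis unfolding \<delta>_def e_def X_def by auto
  qed
  have I'e: "I' = (if j \<noteq> k then 2 * X j else 0)"
  proof -
    have A: "(\<Sum>j'\<in>{..<K}-{k}. 2 * Re (cnj (a j') * (c * \<delta> j'))) = (if j < K \<and> j \<noteq> k then 2 * X j else 0)"
      unfolding trm by (simp add: sum_if_eq)
    have B: "(\<Sum>j'<Ns. 2 * Re (cnj (a (K+j')) * (c * \<delta> (K+j')))) = (if K \<le> j then 2 * X j else 0)"
    proof (cases "K \<le> j")
      case True
      have "(\<Sum>j'<Ns. 2 * Re (cnj (a (K+j')) * (c * \<delta> (K+j')))) = (\<Sum>j'<Ns. if j' = j - K then 2 * X j else 0)"
        unfolding trm using True by (intro sum.cong refl) auto
      also have "\<dots> = 2 * X j" using True ij by (simp add: sum_if_eq)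
      finally show ?thesis using True by simp
    next
      case False
      have "(\<Sum>j'<Ns. 2 * Re (cnj (a (K+j')) * (c * \<delta> (K+j')))) = (\<Sum>j'<Ns. 0)"
        unfolding trm using False by (intro sum.cong refl) auto
      then show ?thesis using False by simp
    qed
    show ?thesis unfolding I'_def A B using k by auto
  qed
  have s'e: "s' = (if j = k then 2 * X j else 0)" unfolding s'_def using trm[of k] by auto
  define I0v where "I0v = If 0"
  define S0 where "S0 = sf 0"
  have Tk_eq: "Tk K H sc2 W k = I0v + S0" unfolding Tk_def I0v_def S0_def I0 s0 ..
  have beta_eq: "beta K H sc2 W k = (S0 / I0v) / (I0v + S0)"
    unfolding beta_def xi_def Tk_eq I0v_def S0_def I0 s0 ..
  have eta_eq: "cnj (eta K H sc2 W k) = a k / complex_of_real I0v"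
    unfolding eta_def I0v_def I0 hwa by simp
  have Ip0: "0 < I0v" "0 < I0v + S0" using Ipos snn unfolding I0v_def S0_def by auto
  have Ip: "0 < I0v" "0 < I0v + S0" "I0v \<noteq> 0" "I0v + S0 \<noteq> 0" "I0v * I0v + I0v * S0 \<noteq> 0"
    "I0v * (I0v + S0) \<noteq> 0" "I0v * I0v \<noteq> 0" "I0v * (I0v * I0v) + I0v * (I0v * S0) \<noteq> 0"
    using Ip0 by (auto simp: ring_distribs[symmetric])
  have val: "(1 / (1 + sf 0 / If 0)) * (0 + (s' * If 0 - sf 0 * I') / (If 0 * If 0))
     = Re (cnj c * (2 * H$$(i,k) * ((if j = k then cnj (eta K H sc2 W k) else 0)
        - complex_of_real (beta K H sc2 W k) * (cH H * W)$$(k,j))))"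
  proof (cases "j = k")
    case True
    have e1: "(if j = k then cnj (eta K H sc2 W k) else 0) - complex_of_real (beta K H sc2 W k) * (cH H * W)$$(k,j)
       = a k / complex_of_real I0v - complex_of_real ((S0 / I0v) / (I0v + S0)) * a k"
      using True by (simp add: eta_eq beta_eq a_def)
    have e2: "(1 / (1 + sf 0 / If 0)) * (0 + (s' * If 0 - sf 0 * I') / (If 0 * If 0)) = 2 * X k / (I0v + S0)"
    proof -
      have "(1 / (1 + S0 / I0v)) * (0 + (2 * X k * I0v - S0 * 0) / (I0v * I0v)) = 2 * X k / (I0v + S0)"
        using Ip by (simp add: field_simps)
      then show ?thesis using True unfolding s'e I'e I0v_def S0_def by simp
    qed
    have "cnj c * (2 * H$$(i,k) * (a k / complex_of_real I0v - complex_of_real ((S0 / I0v) / (I0v + S0)) * a k))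
       = complex_of_real (2 * (1 / I0v - (S0 / I0v) / (I0v + S0))) * (cnj c * (H $$ (i,k) * a k))"
      by (simp add: field_simps)
    then have "Re (cnj c * (2 * H$$(i,k) * (a k / complex_of_real I0v - complex_of_real ((S0 / I0v) / (I0v + S0)) * a k)))
       = 2 * (1 / I0v - (S0 / I0v) / (I0v + S0)) * X k" unfolding X_def by (simp only: Re_complex_of_real_mult)
    moreover have "2 * (1 / I0v - (S0 / I0v) / (I0v + S0)) = 2 / (I0v + S0)" using Ip by (simp add: field_simps)
    ultimately have e3: "Re (cnj c * (2 * H$$(i,k) * (a k / complex_of_real I0v - complex_of_real ((S0 / I0v) / (I0v + S0)) * a k)))
       = 2 * X k / (I0v + S0)" by simp
    show ?thesis unfolding e1 e2 e3 ..
  next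
    case False
    have e1: "(if j = k then cnj (eta K H sc2 W k) else 0) - complex_of_real (beta K H sc2 W k) * (cH H * W)$$(k,j)
       = 0 - complex_of_real ((S0 / I0v) / (I0v + S0)) * a j"
      using False by (simp add: beta_eq a_def)
    have e2: "(1 / (1 + sf 0 / If 0)) * (0 + (s' * If 0 - sf 0 * I') / (If 0 * If 0)) = - 2 * ((S0 / I0v) / (I0v + S0)) * X j"
    proof -
      have "(1 / (1 + S0 / I0v)) * (0 + (0 * I0v - S0 * (2 * X j)) / (I0v * I0v)) = - 2 * ((S0 / I0v) / (I0v + S0)) * X j"
        using Ip by (simp add: field_simps)
      then show ?thesis using False unfolding s'e I'e I0v_def S0_def by simp
    qed
    have "cnj c * (2 * H$$(i,k) * (0 - complex_of_real ((S0 / I0v) / (I0v + S0)) * a j))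
       = complex_of_real (- 2 * ((S0 / I0v) / (I0v + S0))) * (cnj c * (H $$ (i,k) * a j))"
      by (simp add: field_simps)
    then have e3: "Re (cnj c * (2 * H$$(i,k) * (0 - complex_of_real ((S0 / I0v) / (I0v + S0)) * a j)))
       = - 2 * ((S0 / I0v) / (I0v + S0)) * X j" unfolding X_def by (simp only: Re_complex_of_real_mult)
    show ?thesis unfolding e1 e2 e3 ..
  qed
  show ?thesis using dr unfolding val rate_eq[symmetric] V_def E_def m_def .
qed

lemma norm_dir: assumes W: "W \<in> carrier_mat Nt m" and ij: "i < Nt" "j < m"
  shows "((\<lambda>t. Re (mtrace ((W + (c * complex_of_real t) \<cdot>\<^sub>m unitm Nt m i j) * cH (W + (c * complex_of_real t) \<cdot>\<^sub>m unitm Nt m i j))) - Pt)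
     has_real_derivative Re (cnj c * (2 * W $$ (i,j)))) (at 0)"
proof -
  define E where "E = unitm Nt m i j"
  define R1 where "R1 = c \<cdot>\<^sub>m (E * cH W) + cnj c \<cdot>\<^sub>m (W * cH E)"
  define R2 where "R2 = (c * cnj c) \<cdot>\<^sub>m (E * cH E)"
  have Ec: "E \<in> carrier_mat Nt m" by (simp add: E_def)
  have Rc: "W * cH W \<in> carrier_mat Nt Nt" "R1 \<in> carrier_mat Nt Nt" "R2 \<in> carrier_mat Nt Nt"
    unfolding R1_def R2_def using W Ec by auto
  have eq: "Re (mtrace ((W + (c * complex_of_real t) \<cdot>\<^sub>m E) * cH (W + (c * complex_of_real t) \<cdot>\<^sub>m E))) - Pt
     = Re (mtrace (W * cH W)) + t * Re (mtrace R1) + t^2 * Re (mtrace R2) - Pt" for t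
  proof -
    have "mtrace ((W + (c * complex_of_real t) \<cdot>\<^sub>m E) * cH (W + (c * complex_of_real t) \<cdot>\<^sub>m E))
       = mtrace (W * cH W) + complex_of_real t * mtrace R1 + complex_of_real (t^2) * mtrace R2"
      unfolding Rt[OF W Ec] R1_def[symmetric] R2_def[symmetric]
      using Rc by (simp add: mtrace_add[of _ Nt] mtrace_smult[of _ Nt] del: of_real_power)
    then show ?thesis by simp
  qed
  have D: "((\<lambda>t. Re (mtrace (W * cH W)) + t * Re (mtrace R1) + t^2 * Re (mtrace R2) - Pt) has_real_derivative
     0 + 1 * Re (mtrace R1) + 2 * 0 * Re (mtrace R2) - 0) (at 0)"
    by (intro derivative_eq_intros) auto
  have one: "(1\<^sub>m Nt :: complex mat) \<in> carrier_mat Nt Nt" by simp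
  have "mtrace R1 = mtrace (1\<^sub>m Nt * R1)" using Rc by simp
  also have "\<dots> = c * cnj ((cH (1\<^sub>m Nt) * W) $$ (i,j)) + cnj c * (1\<^sub>m Nt * W) $$ (i,j)"
    unfolding R1_def E_def by (rule tr_R1[OF one W ij])
  also have "cH (1\<^sub>m Nt) = (1\<^sub>m Nt :: complex mat)" by (rule eq_matI) auto
  finally have "mtrace R1 = c * cnj (W $$ (i,j)) + cnj c * W $$ (i,j)" using W by simp
  then have v: "Re (mtrace R1) = Re (cnj c * (2 * W $$ (i,j)))" by simp
  show ?thesis using D unfolding E_def[symmetric] eq v by simp
qed

lemma lag_dir:
  assumes Sd: "sdims Nt Nr M S" and M: "0 < M" and H: "H \<in> carrier_mat Nt K" and W: "W \<in> carrier_mat Nt (K+Ns)"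
    and ij: "i < Nt" "j < K+Ns" and sc: "\<forall>k<K. 0 < sc2 k" and inv: "invertible_mat (FIM M L ss2 S W)"
  shows "((\<lambda>t. Lag K H sc2 M L ss2 S dc ds Pt (W + (c * complex_of_real t) \<cdot>\<^sub>m unitm Nt (K+Ns) i j) mu) has_real_derivative
     Re (cnj c * (complex_of_real dc * (\<Sum>k<K. 2 * H$$(i,k) * ((if j = k then cnj (eta K H sc2 W k) else 0)
        - complex_of_real (beta K H sc2 W k) * (cH H * W)$$(k,j)))
      + complex_of_real ds * ((Qmat M L ss2 S W + cH (Qmat M L ss2 S W)) * W) $$ (i,j)
      - complex_of_real mu * (2 * W $$ (i,j))))) (at 0)"
proof -
  define G where "G k = 2 * H$$(i,k) * ((if j = k then cnj (eta K H sc2 W k) else 0)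
        - complex_of_real (beta K H sc2 W k) * (cH H * W)$$(k,j))" for k
  define QQ where "QQ = ((Qmat M L ss2 S W + cH (Qmat M L ss2 S W)) * W) $$ (i,j)"
  have dR: "((\<lambda>t. \<Sum>k<K. rate K H sc2 (W + (c * complex_of_real t) \<cdot>\<^sub>m unitm Nt (K+Ns) i j) k) has_real_derivative
      (\<Sum>k<K. Re (cnj c * G k))) (at 0)"
    unfolding G_def by (intro DERIV_sum rate_dir[OF H W ij]) (use sc in auto)
  have dT: "((\<lambda>t. mtrace (minv (FIM M L ss2 S (W + (c * complex_of_real t) \<cdot>\<^sub>m unitm Nt (K+Ns) i j)))) has_real_derivative
      - Re (cnj c * QQ)) (at 0)"
    unfolding QQ_def by (rule trinv_dir[OF Sd M W ij inv])
  have dN: "((\<lambda>t. Re (mtrace ((W + (c * complex_of_real t) \<cdot>\<^sub>m unitm Nt (K+Ns) i j) * cH (W + (c * complex_of_real t) \<cdot>\<^sub>m unitm Nt (K+Ns) i j))) - Pt)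
     has_real_derivative Re (cnj c * (2 * W $$ (i,j)))) (at 0)"
    by (rule norm_dir[OF W ij])
  have D: "((\<lambda>t. Lag K H sc2 M L ss2 S dc ds Pt (W + (c * complex_of_real t) \<cdot>\<^sub>m unitm Nt (K+Ns) i j) mu) has_real_derivative
     dc * (\<Sum>k<K. Re (cnj c * G k)) - ds * (- Re (cnj c * QQ)) - mu * Re (cnj c * (2 * W $$ (i,j)))) (at 0)"
    unfolding Lag_def fobj_def
    by (intro DERIV_diff DERIV_cmult dR dT dN)
  have v: "dc * (\<Sum>k<K. Re (cnj c * G k)) - ds * (- Re (cnj c * QQ)) - mu * Re (cnj c * (2 * W $$ (i,j)))
     = Re (cnj c * (complex_of_real dc * (\<Sum>k<K. G k) + complex_of_real ds * QQ - complex_of_real mu * (2 * W $$ (i,j))))"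
    by (simp add: ring_distribs sum_distrib_left Re_sum mult.left_commute)
  show ?thesis using D[unfolded v] unfolding G_def QQ_def .
qed

lemma HS1: assumes H: "H \<in> carrier_mat Nt K" and ij: "i < Nt" "j < K"
  shows "(H * cH (Sigma1 K H sc2 W)) $$ (i,j) = H $$ (i,j) * cnj (eta K H sc2 W j)"
proof -
  have S1: "Sigma1 K H sc2 W \<in> carrier_mat K K" by (simp add: Sigma1_def diagc_def)
  have "(H * cH (Sigma1 K H sc2 W)) $$ (i,j) = (\<Sum>k<K. H $$ (i,k) * cnj (Sigma1 K H sc2 W $$ (j,k)))"
    using H S1 ij by (simp add: mult_idx del: index_mult_mat(1))
  also have "\<dots> = (\<Sum>k<K. if k = j then H $$ (i,j) * cnj (eta K H sc2 W j) else 0)"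
    using ij by (intro sum.cong refl) (auto simp: Sigma1_def diagc_def)
  also have "\<dots> = H $$ (i,j) * cnj (eta K H sc2 W j)" using ij by (simp add: sum_if_eq)
  finally show ?thesis .
qed

lemma BW: assumes H: "H \<in> carrier_mat Nt K" and W: "W \<in> carrier_mat Nt n" and ij: "i < Nt" "j < n"
  shows "(H * Sigma2 K H sc2 W * cH H * W) $$ (i,j) = (\<Sum>k<K. H$$(i,k) * complex_of_real (beta K H sc2 W k) * (cH H * W)$$(k,j))"
proof -
  have S2: "Sigma2 K H sc2 W \<in> carrier_mat K K" by (simp add: Sigma2_def diagc_def)
  have HS: "H * Sigma2 K H sc2 W \<in> carrier_mat Nt K" using H S2 by auto
  have "H * Sigma2 K H sc2 W * cH H * W = (H * Sigma2 K H sc2 W) * (cH H * W)"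
    using assoc_mult_mat[OF HS cH_carrier[OF H] W] .
  moreover have "(H * Sigma2 K H sc2 W) $$ (i,k) = H$$(i,k) * complex_of_real (beta K H sc2 W k)" if "k < K" for k
  proof -
    have "(H * Sigma2 K H sc2 W) $$ (i,k) = (\<Sum>l<K. H $$ (i,l) * Sigma2 K H sc2 W $$ (l,k))"
      using H S2 ij that by (simp add: mult_idx del: index_mult_mat(1))
    also have "\<dots> = (\<Sum>l<K. if l = k then H$$(i,k) * complex_of_real (beta K H sc2 W k) else 0)"
      using that by (intro sum.cong refl) (auto simp: Sigma2_def diagc_def)
    finally show ?thesis using that by (simp add: sum_if_eq)
  qed
  moreover have "((H * Sigma2 K H sc2 W) * (cH H * W)) $$ (i,j) = (\<Sum>k<K. (H * Sigma2 K H sc2 W) $$ (i,k) * (cH H * W) $$ (k,j))"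
    using mult_idx[of i "H * Sigma2 K H sc2 W" j "cH H * W"] HS H W ij S2 by (simp del: index_mult_mat(1) assoc_mult_mat)
  ultimately show ?thesis by simp
qed

lemma Ws_idx: "X \<in> carrier_mat Nt Nt \<Longrightarrow> W \<in> carrier_mat Nt (K+Ns) \<Longrightarrow> a < Nt \<Longrightarrow> b < Ns \<Longrightarrow>
   (X * Ws_of K W) $$ (a,b) = (X * W) $$ (a,K+b)"
  by (simp add: mult_idx Ws_of_def del: index_mult_mat(1))

lemma Wc_idx: "X \<in> carrier_mat Nt Nt \<Longrightarrow> W \<in> carrier_mat Nt (K+Ns) \<Longrightarrow> a < Nt \<Longrightarrow> b < K \<Longrightarrow>
   (X * Wc_of K W) $$ (a,b) = (X * W) $$ (a,b)"
  by (simp add: mult_idx Wc_of_def del: index_mult_mat(1))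

lemma lin_mult_idx: "(X1 :: complex mat) \<in> carrier_mat n n \<Longrightarrow> X2 \<in> carrier_mat n n \<Longrightarrow> W \<in> carrier_mat n m \<Longrightarrow> a < n \<Longrightarrow> b < m \<Longrightarrow>
   ((\<alpha> \<cdot>\<^sub>m X1 - \<beta> \<cdot>\<^sub>m X2) * W) $$ (a,b) = \<alpha> * (X1 * W) $$ (a,b) - \<beta> * (X2 * W) $$ (a,b)"
  by (simp add: mult_idx left_diff_distrib sum_subtractf sum_distrib_left mult.assoc del: index_mult_mat(1))

lemma lin3_mult_idx: "(X1 :: complex mat) \<in> carrier_mat n n \<Longrightarrow> X2 \<in> carrier_mat n n \<Longrightarrow> W \<in> carrier_mat n m \<Longrightarrow> a < n \<Longrightarrow> b < m \<Longrightarrow>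
   ((\<gamma> \<cdot>\<^sub>m 1\<^sub>m n + \<alpha> \<cdot>\<^sub>m X1 - \<beta> \<cdot>\<^sub>m X2) * W) $$ (a,b) = \<gamma> * W $$ (a,b) + \<alpha> * (X1 * W) $$ (a,b) - \<beta> * (X2 * W) $$ (a,b)"
proof -
  assume as: "X1 \<in> carrier_mat n n" "X2 \<in> carrier_mat n n" "W \<in> carrier_mat n m" "a < n" "b < m"
  have "((\<gamma> \<cdot>\<^sub>m 1\<^sub>m n + \<alpha> \<cdot>\<^sub>m X1 - \<beta> \<cdot>\<^sub>m X2) * W) $$ (a,b)
     = (\<Sum>k<n. (\<gamma> * (if a = k then 1 else 0) + \<alpha> * X1 $$ (a,k) - \<beta> * X2 $$ (a,k)) * W $$ (k,b))"
    using as by (simp add: mult_idx del: index_mult_mat(1))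
  also have "\<dots> = (\<Sum>k<n. (if k = a then \<gamma> * W $$ (k,b) else 0) + \<alpha> * (X1 $$ (a,k) * W $$ (k,b)) - \<beta> * (X2 $$ (a,k) * W $$ (k,b)))"
    by (intro sum.cong refl) (auto simp: algebra_simps)
  also have "\<dots> = (\<Sum>k<n. (if k = a then \<gamma> * W $$ (k,b) else 0)) + \<alpha> * (\<Sum>k<n. X1 $$ (a,k) * W $$ (k,b)) - \<beta> * (\<Sum>k<n. X2 $$ (a,k) * W $$ (k,b))"
    by (simp only: sum.distrib sum_subtractf sum_distrib_left)
  also have "\<dots> = \<gamma> * W $$ (a,b) + \<alpha> * (X1 * W) $$ (a,b) - \<beta> * (X2 * W) $$ (a,b)"
    using as by (simp add: mult_idx sum_if_eq del: index_mult_mat(1))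
  finally show ?thesis .
qed

theorem theorem1:
  fixes Nt Nr K M L Ns :: nat
    and H :: "complex mat" and sc2 :: "nat \<Rightarrow> real" and ss2 dc ds Pt :: real
    and a b :: "nat \<Rightarrow> real \<Rightarrow> real \<Rightarrow> complex"
    and th ph :: "nat \<Rightarrow> real" and al :: "nat \<Rightarrow> complex"
    and W :: "complex mat" and mu :: real
  defines "S \<equiv> sensing_of Nt Nr M a b th ph al"
  assumes "0 < Nt" "0 < Nr" "0 < K" "0 < M" "0 < L"
    and "H \<in> carrier_mat Nt K"
    and "\<forall>k<K. 0 < sc2 k" and "0 < ss2" and "0 \<le> dc" and "0 \<le> ds" and "0 < Pt"
    and "\<forall>i<Nt. \<forall>x. (\<lambda>p. a i (fst p) (snd p)) differentiable (at x)"
    and "\<forall>i<Nr. \<forall>x. (\<lambda>p. b i (fst p) (snd p)) differentiable (at x)"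
    and "W \<in> carrier_mat Nt (K + Ns)"
    and "invertible_mat (FIM M L ss2 S W)"
    and "grad_zero Nt (K + Ns) (\<lambda>V. Lag K H sc2 M L ss2 S dc ds Pt V mu) W"
  shows "(((complex_of_real (ds / 2)) \<cdot>\<^sub>m (Qmat M L ss2 S W + cH (Qmat M L ss2 S W))
            - complex_of_real dc \<cdot>\<^sub>m (H * Sigma2 K H sc2 W * cH H)) * Ws_of K W
         = complex_of_real mu \<cdot>\<^sub>m Ws_of K W)
    \<and> (invertible_mat (complex_of_real mu \<cdot>\<^sub>m 1\<^sub>m Nt + complex_of_real dc \<cdot>\<^sub>m (H * Sigma2 K H sc2 W * cH H)
            - complex_of_real (ds / 2) \<cdot>\<^sub>m (Qmat M L ss2 S W + cH (Qmat M L ss2 S W)))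
         \<longrightarrow> Wc_of K W =
           minv (complex_of_real mu \<cdot>\<^sub>m 1\<^sub>m Nt + complex_of_real dc \<cdot>\<^sub>m (H * Sigma2 K H sc2 W * cH H)
            - complex_of_real (ds / 2) \<cdot>\<^sub>m (Qmat M L ss2 S W + cH (Qmat M L ss2 S W)))
           * (complex_of_real dc \<cdot>\<^sub>m (H * cH (Sigma1 K H sc2 W))))"
proof -
  have S_def: "S = sensing_of Nt Nr M a b th ph al" using assms(1) by simp
  have Sd: "sdims Nt Nr M S" unfolding S_def by (rule sdims_sensing_of)
  have M: "0 < M" using assms(5) .
  have H: "H \<in> carrier_mat Nt K" using assms(7) .
  have sc: "\<forall>k<K. 0 < sc2 k" using assms(8) .
  have W: "W \<in> carrier_mat Nt (K + Ns)" using assms(15) .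
  have inv: "invertible_mat (FIM M L ss2 S W)" using assms(16) .
  have gz: "grad_zero Nt (K + Ns) (\<lambda>V. Lag K H sc2 M L ss2 S dc ds Pt V mu) W" using assms(17) .
  define Q where "Q = Qmat M L ss2 S W"
  define B where "B = H * Sigma2 K H sc2 W * cH H"
  define Gt where "Gt i j = complex_of_real dc * (\<Sum>k<K. 2 * H$$(i,k) * ((if j = k then cnj (eta K H sc2 W k) else 0)
        - complex_of_real (beta K H sc2 W k) * (cH H * W)$$(k,j)))
      + complex_of_real ds * ((Q + cH Q) * W) $$ (i,j)
      - complex_of_real mu * (2 * W $$ (i,j))" for i j
  have Qc: "Q \<in> carrier_mat Nt Nt" unfolding Q_def Qmat_Qcore using Qcore_carrier[OF Sd] by simp
  have S2c: "Sigma2 K H sc2 W \<in> carrier_mat K K" by (simp add: Sigma2_def diagc_def)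
  have Bc: "B \<in> carrier_mat Nt Nt" unfolding B_def using H S2c by auto
  have QQc: "Q + cH Q \<in> carrier_mat Nt Nt" using Qc by simp
  have G0: "Gt i j = 0" if ij: "i < Nt" "j < K + Ns" for i j
  proof -
    note gzij = gz[unfolded grad_zero_def, rule_format, OF ij]
    have L1: "((\<lambda>t. Lag K H sc2 M L ss2 S dc ds Pt (W + (1 * complex_of_real t) \<cdot>\<^sub>m unitm Nt (K+Ns) i j) mu) has_real_derivative
       Re (cnj 1 * Gt i j)) (at 0)"
      unfolding Gt_def Q_def by (rule lag_dir[OF Sd M H W ij sc inv])
    have L2: "((\<lambda>t. Lag K H sc2 M L ss2 S dc ds Pt (W + (\<i> * complex_of_real t) \<cdot>\<^sub>m unitm Nt (K+Ns) i j) mu) has_real_derivative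
       Re (cnj \<i> * Gt i j)) (at 0)"
      unfolding Gt_def Q_def by (rule lag_dir[OF Sd M H W ij sc inv])
    have "Re (cnj 1 * Gt i j) = 0" using DERIV_unique[OF L1[simplified] conjunct1[OF gzij]] by simp
    moreover have "Re (cnj \<i> * Gt i j) = 0" using DERIV_unique[OF L2 conjunct2[OF gzij]] by simp
    ultimately show ?thesis by (simp add: complex_eq_iff)
  qed
  have Gsum: "(\<Sum>k<K. 2 * H$$(i,k) * ((if j = k then cnj (eta K H sc2 W k) else 0)
        - complex_of_real (beta K H sc2 W k) * (cH H * W)$$(k,j)))
     = 2 * ((if j < K then (H * cH (Sigma1 K H sc2 W)) $$ (i,j) else 0) - (B * W) $$ (i,j))"
    if ij: "i < Nt" "j < K + Ns" for i j
  proof -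
    have "(\<Sum>k<K. 2 * H$$(i,k) * ((if j = k then cnj (eta K H sc2 W k) else 0)
        - complex_of_real (beta K H sc2 W k) * (cH H * W)$$(k,j)))
      = (\<Sum>k<K. (if k = j then 2 * (H$$(i,j) * cnj (eta K H sc2 W j)) else 0)
          - 2 * (H$$(i,k) * complex_of_real (beta K H sc2 W k) * (cH H * W)$$(k,j)))"
      by (intro sum.cong refl) (auto simp: algebra_simps)
    also have "\<dots> = (\<Sum>k<K. (if k = j then 2 * (H$$(i,j) * cnj (eta K H sc2 W j)) else 0))
          - 2 * (\<Sum>k<K. H$$(i,k) * complex_of_real (beta K H sc2 W k) * (cH H * W)$$(k,j))"
      by (simp only: sum_subtractf sum_distrib_left)
    also have "(\<Sum>k<K. (if k = j then 2 * (H$$(i,j) * cnj (eta K H sc2 W j)) else 0))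
       = 2 * (if j < K then (H * cH (Sigma1 K H sc2 W)) $$ (i,j) else 0)"
      using HS1[OF H ij(1)] by (simp add: sum_if_eq)
    also have "(\<Sum>k<K. H$$(i,k) * complex_of_real (beta K H sc2 W k) * (cH H * W)$$(k,j)) = (B * W) $$ (i,j)"
      unfolding B_def using BW[OF H W ij] by simp
    finally show ?thesis by (simp add: algebra_simps)
  qed
  have part1: "(complex_of_real (ds / 2) \<cdot>\<^sub>m (Q + cH Q) - complex_of_real dc \<cdot>\<^sub>m B) * Ws_of K W
         = complex_of_real mu \<cdot>\<^sub>m Ws_of K W"
  proof (rule eq_matI)
    have Wsd: "dim_row (Ws_of K W) = Nt" "dim_col (Ws_of K W) = Ns" using W by (auto simp: Ws_of_def)
    fix a b' assume "a < dim_row (complex_of_real mu \<cdot>\<^sub>m Ws_of K W)" "b' < dim_col (complex_of_real mu \<cdot>\<^sub>m Ws_of K W)"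
    then have ab: "a < Nt" "b' < Ns" using Wsd by auto
    have ij: "a < Nt" "K + b' < K + Ns" using ab by auto
    have e: "Gt a (K + b') = 0" by (rule G0[OF ij])
    have "((complex_of_real (ds / 2) \<cdot>\<^sub>m (Q + cH Q) - complex_of_real dc \<cdot>\<^sub>m B) * Ws_of K W) $$ (a, b')
       = ((complex_of_real (ds / 2) \<cdot>\<^sub>m (Q + cH Q) - complex_of_real dc \<cdot>\<^sub>m B) * W) $$ (a, K + b')"
      by (rule Ws_idx) (use QQc Bc W ab in auto)
    also have "\<dots> = complex_of_real (ds / 2) * ((Q + cH Q) * W) $$ (a, K + b') - complex_of_real dc * (B * W) $$ (a, K + b')"
      by (rule lin_mult_idx[OF QQc Bc W ij])
    also have "\<dots> = complex_of_real mu * W $$ (a, K + b')"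
    proof -
      have "complex_of_real dc * (2 * (0 - (B * W) $$ (a, K + b'))) + complex_of_real ds * ((Q + cH Q) * W) $$ (a, K + b')
         - complex_of_real mu * (2 * W $$ (a, K + b')) = 0"
        using e unfolding Gt_def Gsum[OF ij] by simp
      then show ?thesis by (simp add: algebra_simps)
    qed
    also have "\<dots> = (complex_of_real mu \<cdot>\<^sub>m Ws_of K W) $$ (a, b')"
      using ab W by (simp add: Ws_of_def)
    finally show "((complex_of_real (ds / 2) \<cdot>\<^sub>m (Q + cH Q) - complex_of_real dc \<cdot>\<^sub>m B) * Ws_of K W) $$ (a, b')
        = (complex_of_real mu \<cdot>\<^sub>m Ws_of K W) $$ (a, b')" .
  qed (use W Bc QQc in \<open>auto simp: Ws_of_def\<close>)
  have part2: "Wc_of K W = minv (complex_of_real mu \<cdot>\<^sub>m 1\<^sub>m Nt + complex_of_real dc \<cdot>\<^sub>m B - complex_of_real (ds / 2) \<cdot>\<^sub>m (Q + cH Q))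
           * (complex_of_real dc \<cdot>\<^sub>m (H * cH (Sigma1 K H sc2 W)))"
    if invA: "invertible_mat (complex_of_real mu \<cdot>\<^sub>m 1\<^sub>m Nt + complex_of_real dc \<cdot>\<^sub>m B - complex_of_real (ds / 2) \<cdot>\<^sub>m (Q + cH Q))"
  proof -
    define A where "A = complex_of_real mu \<cdot>\<^sub>m 1\<^sub>m Nt + complex_of_real dc \<cdot>\<^sub>m B - complex_of_real (ds / 2) \<cdot>\<^sub>m (Q + cH Q)"
    have Ac: "A \<in> carrier_mat Nt Nt" unfolding A_def using QQc by (intro minus_carrier_mat) simp
    have dA: "det A \<noteq> 0" using invertible_det[OF invA[folded A_def] Ac] .
    note Ap = minv_props[OF Ac dA]
    have Wcc: "Wc_of K W \<in> carrier_mat Nt K" using W by (auto simp: Wc_of_def)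
    have S1c0: "Sigma1 K H sc2 W \<in> carrier_mat K K" by (simp add: Sigma1_def diagc_def)
    have S1c: "H * cH (Sigma1 K H sc2 W) \<in> carrier_mat Nt K" using H S1c0 by auto
    have AW: "A * Wc_of K W = complex_of_real dc \<cdot>\<^sub>m (H * cH (Sigma1 K H sc2 W))"
    proof (rule eq_matI)
      fix a b' assume "a < dim_row (complex_of_real dc \<cdot>\<^sub>m (H * cH (Sigma1 K H sc2 W)))"
        "b' < dim_col (complex_of_real dc \<cdot>\<^sub>m (H * cH (Sigma1 K H sc2 W)))"
      then have ab: "a < Nt" "b' < K" using S1c by auto
      have ij: "a < Nt" "b' < K + Ns" using ab by auto
      have e: "Gt a b' = 0" by (rule G0[OF ij])
      have "(A * Wc_of K W) $$ (a, b') = (A * W) $$ (a, b')"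
        by (rule Wc_idx) (use Ac W ab in auto)
      also have "\<dots> = complex_of_real mu * W $$ (a, b') + complex_of_real dc * (B * W) $$ (a, b')
          - complex_of_real (ds / 2) * ((Q + cH Q) * W) $$ (a, b')"
        unfolding A_def by (rule lin3_mult_idx[OF Bc QQc W ij])
      also have "\<dots> = complex_of_real dc * (H * cH (Sigma1 K H sc2 W)) $$ (a, b')"
      proof -
        have "complex_of_real dc * (2 * ((H * cH (Sigma1 K H sc2 W)) $$ (a, b') - (B * W) $$ (a, b')))
           + complex_of_real ds * ((Q + cH Q) * W) $$ (a, b') - complex_of_real mu * (2 * W $$ (a, b')) = 0"
          using e ab unfolding Gt_def Gsum[OF ij] by simp
        then show ?thesis by (simp add: algebra_simps) (simp add: field_simps)
      qed
      also have "\<dots> = (complex_of_real dc \<cdot>\<^sub>m (H * cH (Sigma1 K H sc2 W))) $$ (a, b')"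
        using ab S1c[THEN carrier_matD(1)] S1c[THEN carrier_matD(2)] by simp
      finally show "(A * Wc_of K W) $$ (a, b') = (complex_of_real dc \<cdot>\<^sub>m (H * cH (Sigma1 K H sc2 W))) $$ (a, b')" .
    qed (use Ac Wcc S1c in auto)
    have "Wc_of K W = (minv A * A) * Wc_of K W" using Ap Wcc by simp
    also have "\<dots> = minv A * (A * Wc_of K W)" using assoc_mult_mat[OF Ap(1) Ac Wcc] .
    finally have "Wc_of K W = minv A * (complex_of_real dc \<cdot>\<^sub>m (H * cH (Sigma1 K H sc2 W)))" unfolding AW .
    then show ?thesis unfolding A_def .
  qed
  show ?thesis using part1 part2 unfolding Q_def B_def by blast
qed

end
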